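(* Let $\mathcal{H}$ be a complex Hilbert space and $T\in\mathcal{B}(\mathcal{H})$. (a) If $T$ is a $\Delta_T$-regular concave operator such that the compression $\widehat{T}=P_{\overline{\mathcal{R}(\Delta_T)}}T|_{\overline{\mathcal{R}(\Delta_T)}}$ is quasinormal, then for every integer $n\ge2$, $T^n$ is a concave operator which is $\Delta_{T^n}$-regular. (b) Suppose $T$ is concave and that $\sigma^{-1}P_{\mathcal{N}(\Delta_T)}T|_{\overline{\mathcal{R}(\Delta_T)}}$ is an isometry, where $\sigma>0$, $\sigma^2=\|\Delta_T\|+1$. Then $T$ is $\Delta_T$-regular if and only if $\widehat{T}=P_{\overline{\mathcal{R}(\Delta_T)}}T|_{\overline{\mathcal{R}(\Delta_T)}}$ is a quasinormal contraction.
   Context: For an operator $A$, $\Delta_A=A^*A-I$. $T$ is concave if $T^{*2}T^2-2T^*T+I\le0$. For a positive operator $A$, $T$ is $A$-regular if $AT=A^{1/2}TA^{1/2}$. An operator $Q$ is quasinormal if $QQ^*Q=Q^*Q^2$. (In the paper, the hypothesis of (a) is phrased as "satisfies one of the equivalent conditions" of a theorem, one of which is quasinormality of $\widehat T$; these conditions are equivalent for $\Delta_T$-regular concave $T$.) *)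

theory Defs
  imports "HOL-Analysis.Analysis"
begin

text \<open>The distribution has no complex inner product spaces, so we introduce them
as a type class: a real normed vector space with a compatible complex scalar
multiplication and an inner product (linear in the first argument, conjugate
linear in the second) inducing the norm.\<close>

class complex_inner = real_normed_vector +
  fixes scaleC :: "complex \<Rightarrow> 'a \<Rightarrow> 'a" (infixr \<open>*\<^sub>C\<close> 75)
    and cinner :: "'a \<Rightarrow> 'a \<Rightarrow> complex"
  assumes scaleC_add_right: "a *\<^sub>C (x + y) = a *\<^sub>C x + a *\<^sub>C y"
    and scaleC_add_left: "(a + b) *\<^sub>C x = a *\<^sub>C x + b *\<^sub>C x"
    and scaleC_scaleC: "a *\<^sub>C (b *\<^sub>C x) = (a * b) *\<^sub>C x"
    and scaleC_one: "1 *\<^sub>C x = x"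
    and scaleR_scaleC: "r *\<^sub>R x = complex_of_real r *\<^sub>C x"
    and cinner_commute: "cinner x y = cnj (cinner y x)"
    and cinner_add_left: "cinner (x + y) z = cinner x z + cinner y z"
    and cinner_scaleC_left: "cinner (a *\<^sub>C x) y = a * cinner x y"
    and cinner_self_real: "Im (cinner x x) = 0"
    and cinner_self_nonneg: "0 \<le> Re (cinner x x)"
    and cinner_self_eq_zero: "cinner x x = 0 \<longleftrightarrow> x = 0"
    and norm_eq_sqrt_cinner: "norm x = sqrt (Re (cinner x x))"

class chilbert_space = complex_inner + complete_space

definition cbounded :: "('a::complex_inner \<Rightarrow> 'a) \<Rightarrow> bool" where
  "cbounded T \<longleftrightarrow> (\<forall>x y. T (x + y) = T x + T y) \<and> (\<forall>c x. T (c *\<^sub>C x) = c *\<^sub>C T x)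
      \<and> (\<exists>K. \<forall>x. norm (T x) \<le> norm x * K)"

definition adj :: "('a::complex_inner \<Rightarrow> 'a) \<Rightarrow> ('a \<Rightarrow> 'a)" where
  "adj T = (THE S. \<forall>x y. cinner (T x) y = cinner x (S y))"

definition Delta :: "('a::complex_inner \<Rightarrow> 'a) \<Rightarrow> ('a \<Rightarrow> 'a)" where
  "Delta T = (\<lambda>x. adj T (T x) - x)"

definition opos :: "('a::complex_inner \<Rightarrow> 'a) \<Rightarrow> bool" where
  "opos A \<longleftrightarrow> cbounded A \<and> (\<forall>x. Im (cinner (A x) x) = 0 \<and> 0 \<le> Re (cinner (A x) x))"

definition concave_op :: "('a::complex_inner \<Rightarrow> 'a) \<Rightarrow> bool" where
  "concave_op T \<longleftrightarrow> opos (\<lambda>x. - (adj T (adj T (T (T x))) - 2 *\<^sub>R adj T (T x) + x))"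

definition op_sqrt :: "('a::complex_inner \<Rightarrow> 'a) \<Rightarrow> ('a \<Rightarrow> 'a)" where
  "op_sqrt A = (THE B. opos B \<and> (\<forall>x. B (B x) = A x))"

definition regular :: "('a::complex_inner \<Rightarrow> 'a) \<Rightarrow> ('a \<Rightarrow> 'a) \<Rightarrow> bool" where
  "regular A T \<longleftrightarrow> (\<forall>x. A (T x) = op_sqrt A (T (op_sqrt A x)))"

definition quasinormal :: "('a::complex_inner \<Rightarrow> 'a) \<Rightarrow> bool" where
  "quasinormal Q \<longleftrightarrow> (\<forall>x. Q (adj Q (Q x)) = adj Q (Q (Q x)))"

definition proj :: "'a::complex_inner set \<Rightarrow> 'a \<Rightarrow> 'a" where
  "proj M x = (THE m. m \<in> M \<and> (\<forall>y\<in>M. cinner (x - m) y = 0))"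

text \<open>The compression \<open>P_M T|_M\<close>, represented as the operator \<open>P_M T P_M\<close> on the
whole space (it agrees with \<open>P_M T|_M\<close> on M and vanishes on the orthogonal
complement of M).\<close>
definition compression :: "'a::complex_inner set \<Rightarrow> ('a \<Rightarrow> 'a) \<Rightarrow> ('a \<Rightarrow> 'a)" where
  "compression M T = (\<lambda>x. proj M (T (proj M x)))"

end

theory Submission
  imports Defs
begin


lemma scaleC_zero_right[simp]: "a *\<^sub>C (0::'a::complex_inner) = 0"
proof -
  have "a *\<^sub>C (0::'a) = a *\<^sub>C 0 + a *\<^sub>C 0" by (metis add.right_neutral scaleC_add_right)
  then show ?thesis by simp
qed

lemma scaleC_zero_left[simp]: "0 *\<^sub>C (x::'a::complex_inner) = 0"
  using scaleR_scaleC[of 0 x] by simp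

lemma scaleC_minus_right: "a *\<^sub>C (- (x::'a::complex_inner)) = - (a *\<^sub>C x)"
proof -
  have "a *\<^sub>C (- x) + a *\<^sub>C x = 0" by (simp flip: scaleC_add_right)
  then show ?thesis by (simp add: eq_neg_iff_add_eq_0)
qed

lemma scaleC_diff_right: "a *\<^sub>C ((x::'a::complex_inner) - y) = a *\<^sub>C x - a *\<^sub>C y"
  unfolding diff_conv_add_uminus by (simp only: scaleC_add_right scaleC_minus_right)

lemma scaleC_minus_left: "(- a) *\<^sub>C (x::'a::complex_inner) = - (a *\<^sub>C x)"
proof -
  have "(- a) *\<^sub>C x + a *\<^sub>C x = 0" by (simp flip: scaleC_add_left)
  then show ?thesis by (simp add: eq_neg_iff_add_eq_0)
qed

lemma scaleC_diff_left: "(a - b) *\<^sub>C (x::'a::complex_inner) = a *\<^sub>C x - b *\<^sub>C x"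
  unfolding diff_conv_add_uminus by (simp only: scaleC_add_left scaleC_minus_left)

lemma scaleC_of_real: "complex_of_real r *\<^sub>C (x::'a::complex_inner) = r *\<^sub>R x"
  by (simp add: scaleR_scaleC)

lemma scaleC_sum_right: "a *\<^sub>C (\<Sum>i\<in>I. f i) = (\<Sum>i\<in>I. a *\<^sub>C (f i::'a::complex_inner))"
  by (induction I rule: infinite_finite_induct) (auto simp: scaleC_add_right)

lemma cinner_add_right: "cinner x (y + z) = cinner x y + cinner x (z::'a::complex_inner)"
  by (subst (1 2 3) cinner_commute) (simp add: cinner_add_left)

lemma cinner_scaleC_right: "cinner x (a *\<^sub>C y) = cnj a * cinner x (y::'a::complex_inner)"
  by (subst (1 2) cinner_commute) (simp add: cinner_scaleC_left)

lemma cinner_zero_left[simp]: "cinner 0 (x::'a::complex_inner) = 0"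
  using cinner_add_left[of 0 0 x] by simp

lemma cinner_zero_right[simp]: "cinner x (0::'a::complex_inner) = 0"
  by (subst cinner_commute) simp

lemma cinner_minus_left: "cinner (- x) (y::'a::complex_inner) = - cinner x y"
  using cinner_add_left[of "-x" x y] by (simp add: eq_neg_iff_add_eq_0)

lemma cinner_minus_right: "cinner x (- (y::'a::complex_inner)) = - cinner x y"
  using cinner_add_right[of x "-y" y] by (simp add: eq_neg_iff_add_eq_0)

lemma cinner_diff_left: "cinner (x - y) (z::'a::complex_inner) = cinner x z - cinner y z"
  unfolding diff_conv_add_uminus by (simp only: cinner_add_left cinner_minus_left)

lemma cinner_diff_right: "cinner x (y - (z::'a::complex_inner)) = cinner x y - cinner x z"
  unfolding diff_conv_add_uminus by (simp only: cinner_add_right cinner_minus_right)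

lemma cinner_scaleR_left: "cinner (r *\<^sub>R x) (y::'a::complex_inner) = complex_of_real r * cinner x y"
  by (simp add: scaleR_scaleC cinner_scaleC_left)

lemma cinner_scaleR_right: "cinner x (r *\<^sub>R (y::'a::complex_inner)) = complex_of_real r * cinner x y"
  by (simp add: scaleR_scaleC cinner_scaleC_right)

lemma cinner_sum_left: "cinner (\<Sum>i\<in>I. f i) (y::'a::complex_inner) = (\<Sum>i\<in>I. cinner (f i) y)"
  by (induction I rule: infinite_finite_induct) (auto simp: cinner_add_left)

lemma cinner_sum_right: "cinner y (\<Sum>i\<in>I. f i) = (\<Sum>i\<in>I. cinner (y::'a::complex_inner) (f i))"
  by (induction I rule: infinite_finite_induct) (auto simp: cinner_add_right)

lemma cinner_self: "cinner x (x::'a::complex_inner) = complex_of_real ((norm x)\<^sup>2)"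
proof -
  have "(norm x)\<^sup>2 = Re (cinner x x)" using norm_eq_sqrt_cinner[of x] cinner_self_nonneg[of x] by simp
  then show ?thesis using cinner_self_real[of x] by (simp add: complex_eq_iff)
qed

lemma norm_sq_cinner: "(norm (x::'a::complex_inner))\<^sup>2 = Re (cinner x x)"
  by (simp add: cinner_self)

lemma cinner_eq_zero_imp: "(\<And>y. cinner x y = 0) \<Longrightarrow> (x::'a::complex_inner) = 0"
  using cinner_self_eq_zero[of x] by simp

lemma cinner_ext: "(\<And>y. cinner x y = cinner z y) \<Longrightarrow> (x::'a::complex_inner) = z"
proof -
  assume "\<And>y. cinner x y = cinner z y"
  then have "cinner (x - z) (x - z) = 0" by (simp add: cinner_diff_left)
  then show ?thesis using cinner_self_eq_zero[of "x - z"] by simp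
qed

lemma cinner_ext_right: "(\<And>y. cinner y x = cinner y z) \<Longrightarrow> (x::'a::complex_inner) = z"
  by (rule cinner_ext, subst (1 2) cinner_commute, simp)

lemma norm_scaleC: "norm (a *\<^sub>C (x::'a::complex_inner)) = cmod a * norm x"
proof -
  have "cinner (a *\<^sub>C x) (a *\<^sub>C x) = (a * cnj a) * cinner x x"
    by (simp add: cinner_scaleC_left cinner_scaleC_right)
  also have "\<dots> = complex_of_real ((cmod a * norm x)\<^sup>2)"
    by (simp only: complex_mult_cnj cinner_self of_real_mult [symmetric] power_mult_distrib cmod_power2)
  finally have "(norm (a *\<^sub>C x))\<^sup>2 = (cmod a * norm x)\<^sup>2"
    by (simp add: norm_sq_cinner)
  then show ?thesis by (simp add: power2_eq_iff_nonneg)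
qed

lemma bounded_linear_scaleC: "bounded_linear (\<lambda>x::'a::complex_inner. a *\<^sub>C x)"
proof
  show "a *\<^sub>C (x + y) = a *\<^sub>C x + a *\<^sub>C y" for x y :: 'a by (rule scaleC_add_right)
  show "a *\<^sub>C (r *\<^sub>R x) = r *\<^sub>R (a *\<^sub>C x)" for r and x :: 'a
    by (simp add: scaleR_scaleC scaleC_scaleC mult.commute)
  show "\<exists>K. \<forall>x::'a. norm (a *\<^sub>C x) \<le> norm x * K"
    by (rule exI[of _ "cmod a"]) (simp add: norm_scaleC mult.commute)
qed

section \<open>Cauchy-Schwarz for positive sesquilinear forms\<close>

lemma cs_form:
  fixes f :: "'a::complex_inner \<Rightarrow> 'a \<Rightarrow> complex"
  assumes addl: "\<And>x y z. f (x + y) z = f x z + f y z"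
    and scl: "\<And>a x y. f (a *\<^sub>C x) y = a * f x y"
    and herm: "\<And>x y. f x y = cnj (f y x)"
    and pos: "\<And>x. Im (f x x) = 0 \<and> 0 \<le> Re (f x x)"
  shows "(cmod (f x y))\<^sup>2 \<le> Re (f x x) * Re (f y y)"
proof -
  have addr: "f x (y + z) = f x y + f x z" for x y z
    by (metis addl herm complex_cnj_add)
  have scr: "f x (a *\<^sub>C y) = cnj a * f x y" for a x y
    by (metis scl herm complex_cnj_mult complex_cnj_cnj)
  have fx: "f x x = complex_of_real (Re (f x x))" for x using pos[of x] by (simp add: complex_eq_iff)
  define c where "c = f x y"
  define p where "p = Re (f x x)"
  define q where "q = Re (f y y)"
  have key: "0 \<le> p - 2 * t * (cmod c)\<^sup>2 + t\<^sup>2 * (cmod c)\<^sup>2 * q" for t :: real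
  proof -
    define z where "z = x + (- complex_of_real t * c) *\<^sub>C y"
    have "f z z = f x x + (- complex_of_real t * c) * f y x
        + cnj (- complex_of_real t * c) * f x y
        + (- complex_of_real t * c) * cnj (- complex_of_real t * c) * f y y"
      unfolding z_def by (simp add: addl addr scl scr algebra_simps)
    also have "f y x = cnj c" unfolding c_def by (metis herm)
    finally have "f z z = f x x - 2 * complex_of_real t * (c * cnj c) + complex_of_real t ^ 2 * (c * cnj c) * f y y"
      unfolding c_def by (simp add: algebra_simps power2_eq_square)
    then have "Re (f z z) = p - 2 * t * (cmod c)\<^sup>2 + t\<^sup>2 * (cmod c)\<^sup>2 * q"
      unfolding p_def q_def
      apply (simp add: complex_mult_cnj del: of_real_power)
      apply (subst fx[of y])
      apply (simp del: of_real_power add: power2_eq_square)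
      using cmod_power2[of c] by (simp add: power2_eq_square)
    then show ?thesis using pos[of z] by simp
  qed
  have p0: "0 \<le> p" and q0: "0 \<le> q" using pos unfolding p_def q_def by auto
  show ?thesis
  proof (cases "q = 0")
    case True
    have "(cmod c)\<^sup>2 = 0"
    proof (rule ccontr)
      assume ne: "(cmod c)\<^sup>2 \<noteq> 0"
      then have pos2: "(cmod c)\<^sup>2 > 0" by simp
      have "0 \<le> p - 2 * ((p + 1) / (cmod c)\<^sup>2) * (cmod c)\<^sup>2" using key[of "(p+1)/(cmod c)\<^sup>2"] True by simp
      then show False using pos2 p0 by simp
    qed
    then show ?thesis using True p0 unfolding c_def p_def q_def by simp
  next
    case False
    then have qp: "q > 0" using q0 by simp
    have "0 \<le> p - 2 * (1/q) * (cmod c)\<^sup>2 + (1/q)\<^sup>2 * (cmod c)\<^sup>2 * q" by (rule key)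
    then have "0 \<le> p - (cmod c)\<^sup>2 / q" using qp by (simp add: power2_eq_square field_simps)
    then have "(cmod c)\<^sup>2 \<le> p * q" using qp by (simp add: field_simps)
    then show ?thesis unfolding c_def p_def q_def by simp
  qed
qed

lemma cauchy_schwarz: "cmod (cinner x y) \<le> norm x * norm (y::'a::complex_inner)"
proof -
  have "(cmod (cinner x y))\<^sup>2 \<le> Re (cinner x x) * Re (cinner y y)"
    by (rule cs_form[OF cinner_add_left cinner_scaleC_left cinner_commute]) (simp add: cinner_self_real cinner_self_nonneg)
  also have "\<dots> = (norm x * norm y)\<^sup>2" by (simp add: norm_sq_cinner power_mult_distrib)
  finally show ?thesis by (simp add: power2_le_iff_abs_le)
qed

lemma bounded_linear_cinner_left: "bounded_linear (\<lambda>x::'a::complex_inner. cinner x y)"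
proof
  show "cinner (x + z) y = cinner x y + cinner z y" for x z :: 'a by (rule cinner_add_left)
  show "cinner (r *\<^sub>R x) y = r *\<^sub>R cinner x y" for r and x :: 'a
    by (simp add: cinner_scaleR_left scaleR_conv_of_real)
  show "\<exists>K. \<forall>x::'a. norm (cinner x y) \<le> norm x * K"
    using cauchy_schwarz by blast
qed

lemma bounded_linear_cinner_right: "bounded_linear (\<lambda>y::'a::complex_inner. cinner x y)"
proof
  show "cinner x (y + z) = cinner x y + cinner x z" for y z :: 'a by (rule cinner_add_right)
  show "cinner x (r *\<^sub>R y) = r *\<^sub>R cinner x y" for r and y :: 'a
    by (simp add: cinner_scaleR_right scaleR_conv_of_real)
  show "\<exists>K. \<forall>y::'a. norm (cinner x y) \<le> norm y * K"
    using cauchy_schwarz by (metis mult.commute)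
qed

lemma continuous_cinner_left: "continuous_on S (\<lambda>x::'a::complex_inner. cinner x y)"
  by (intro linear_continuous_on bounded_linear_cinner_left)

lemma continuous_cinner_right: "continuous_on S (\<lambda>x::'a::complex_inner. cinner y x)"
  by (intro linear_continuous_on bounded_linear_cinner_right)

lemma norm_add_sq: "(norm (x + y))\<^sup>2 = (norm x)\<^sup>2 + (norm y)\<^sup>2 + 2 * Re (cinner x (y::'a::complex_inner))"
proof -
  have "cinner (x+y) (x+y) = cinner x x + cinner y y + (cinner x y + cinner y x)"
    by (simp add: cinner_add_left cinner_add_right)
  moreover have "Re (cinner x y + cinner y x) = 2 * Re (cinner x y)"
    by (metis cinner_commute complex_add_cnj Re_complex_of_real mult.commute mult_2_right plus_complex.sel(1) Re_divide_numeral Re_complex_of_real)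
  ultimately show ?thesis by (simp add: norm_sq_cinner)
qed

lemma pythag: "cinner x y = 0 \<Longrightarrow> (norm (x + y))\<^sup>2 = (norm x)\<^sup>2 + (norm (y::'a::complex_inner))\<^sup>2"
  by (simp add: norm_add_sq)


lemma cboundedI:
  assumes "\<And>x y. T (x + y) = T x + T y" "\<And>c x. T (c *\<^sub>C x) = c *\<^sub>C T x"
    "\<And>x. norm (T x) \<le> norm x * K"
  shows "cbounded T"
  using assms unfolding cbounded_def by blast

context
  fixes T :: "'a::complex_inner \<Rightarrow> 'a"
  assumes cb: "cbounded T"
begin

lemma cb_add: "T (x + y) = T x + T y" using cb unfolding cbounded_def by blast
lemma cb_scaleC: "T (c *\<^sub>C x) = c *\<^sub>C T x" using cb unfolding cbounded_def by blast
lemma cb_scaleR: "T (r *\<^sub>R x) = r *\<^sub>R T x" by (simp add: scaleR_scaleC cb_scaleC)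
lemma cb_bl: "bounded_linear T"
proof
  show "T (x + y) = T x + T y" for x y by (rule cb_add)
  show "T (r *\<^sub>R x) = r *\<^sub>R T x" for r x by (rule cb_scaleR)
  show "\<exists>K. \<forall>x. norm (T x) \<le> norm x * K" using cb unfolding cbounded_def by blast
qed
lemma cb_zero[simp]: "T 0 = 0" using linear_0[OF bounded_linear.linear[OF cb_bl]] .
lemma cb_minus: "T (- x) = - T x" using linear_neg[OF bounded_linear.linear[OF cb_bl]] .
lemma cb_diff: "T (x - y) = T x - T y" using linear_diff[OF bounded_linear.linear[OF cb_bl]] .
lemma cb_sum: "T (\<Sum>i\<in>I. f i) = (\<Sum>i\<in>I. T (f i))" using linear_sum[OF bounded_linear.linear[OF cb_bl]] .
lemma cb_norm: "norm (T x) \<le> onorm T * norm x" using onorm[OF cb_bl] .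
lemma cb_onorm_nonneg: "0 \<le> onorm T" using onorm_pos_le[OF cb_bl] .
lemma cb_cont: "continuous_on S T" using linear_continuous_on[OF cb_bl] .
lemma cb_isCont: "isCont T x" using linear_continuous_at[OF cb_bl] .

end

lemma cbounded_comp: "cbounded S \<Longrightarrow> cbounded T \<Longrightarrow> cbounded (\<lambda>x. S (T x))"
proof -
  assume s: "cbounded S" and t: "cbounded T"
  show ?thesis
  proof (rule cboundedI[where K = "onorm S * onorm T"])
    show "S (T (x + y)) = S (T x) + S (T y)" for x y using s t by (simp add: cb_add)
    show "S (T (c *\<^sub>C x)) = c *\<^sub>C S (T x)" for c x using s t by (simp add: cb_scaleC)
    show "norm (S (T x)) \<le> norm x * (onorm S * onorm T)" for x
    proof -
      have "norm (S (T x)) \<le> onorm S * norm (T x)" by (rule cb_norm[OF s])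
      also have "\<dots> \<le> onorm S * (onorm T * norm x)"
        by (rule mult_left_mono[OF cb_norm[OF t] cb_onorm_nonneg[OF s]])
      finally show ?thesis by (simp add: algebra_simps)
    qed
  qed
qed

lemma cbounded_comp': "cbounded S \<Longrightarrow> cbounded T \<Longrightarrow> cbounded (S \<circ> T)"
  using cbounded_comp[of S T] by (simp add: comp_def)

lemma cbounded_id: "cbounded (\<lambda>x::'a::complex_inner. x)"
  by (rule cboundedI[where K=1]) auto

lemma cbounded_id': "cbounded (id::'a::complex_inner \<Rightarrow> 'a)"
  using cbounded_id by (simp add: id_def)

lemma cbounded_zero: "cbounded (\<lambda>x::'a::complex_inner. 0::'a)"
  by (rule cboundedI[where K=0]) auto

lemma cbounded_add: "cbounded S \<Longrightarrow> cbounded T \<Longrightarrow> cbounded (\<lambda>x. S x + T x)"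
proof -
  assume s: "cbounded S" and t: "cbounded T"
  show ?thesis
  proof (rule cboundedI[where K = "onorm S + onorm T"])
    show "S (x + y) + T (x + y) = S x + T x + (S y + T y)" for x y using s t by (simp add: cb_add)
    show "S (c *\<^sub>C x) + T (c *\<^sub>C x) = c *\<^sub>C (S x + T x)" for c x using s t by (simp add: cb_scaleC scaleC_add_right)
    show "norm (S x + T x) \<le> norm x * (onorm S + onorm T)" for x
      using norm_triangle_ineq[of "S x" "T x"] cb_norm[OF s, of x] cb_norm[OF t, of x]
      by (simp add: algebra_simps)
  qed
qed

lemma cbounded_scaleR: "cbounded T \<Longrightarrow> cbounded (\<lambda>x. r *\<^sub>R T x)"
proof -
  assume t: "cbounded T"
  show ?thesis
  proof (rule cboundedI[where K = "\<bar>r\<bar> * onorm T"])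
    show "r *\<^sub>R T (x + y) = r *\<^sub>R T x + r *\<^sub>R T y" for x y using t by (simp add: cb_add scaleR_add_right)
    show "r *\<^sub>R T (c *\<^sub>C x) = c *\<^sub>C (r *\<^sub>R T x)" for c x using t
      by (simp add: cb_scaleC scaleR_scaleC scaleC_scaleC mult.commute)
    show "norm (r *\<^sub>R T x) \<le> norm x * (\<bar>r\<bar> * onorm T)" for x
      using cb_norm[OF t, of x] mult_left_mono[OF cb_norm[OF t, of x], of "\<bar>r\<bar>"]
      by (simp add: algebra_simps)
  qed
qed

lemma cbounded_minus: "cbounded T \<Longrightarrow> cbounded (\<lambda>x. - T x)"
  using cbounded_scaleR[of T "-1"] by simp

lemma cbounded_diff: "cbounded S \<Longrightarrow> cbounded T \<Longrightarrow> cbounded (\<lambda>x. S x - T x)"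
  using cbounded_add[of S "\<lambda>x. - T x"] cbounded_minus[of T] by simp

lemma cbounded_funpow: "cbounded T \<Longrightarrow> cbounded (T ^^ n)"
  by (induction n) (simp_all add: cbounded_id' cbounded_comp')

section \<open>Complex subspaces and the projection theorem\<close>

definition csubspace :: "'a::complex_inner set \<Rightarrow> bool" where
  "csubspace M \<longleftrightarrow> 0 \<in> M \<and> (\<forall>x\<in>M. \<forall>y\<in>M. x + y \<in> M) \<and> (\<forall>c. \<forall>x\<in>M. c *\<^sub>C x \<in> M)"

lemma csubspace_0: "csubspace M \<Longrightarrow> 0 \<in> M" unfolding csubspace_def by blast
lemma csubspace_add: "csubspace M \<Longrightarrow> x \<in> M \<Longrightarrow> y \<in> M \<Longrightarrow> x + y \<in> M" unfolding csubspace_def by blast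
lemma csubspace_scaleC: "csubspace M \<Longrightarrow> x \<in> M \<Longrightarrow> c *\<^sub>C x \<in> M" unfolding csubspace_def by blast
lemma csubspace_scaleR: "csubspace M \<Longrightarrow> x \<in> M \<Longrightarrow> r *\<^sub>R x \<in> M"
  unfolding scaleR_scaleC by (rule csubspace_scaleC)
lemma csubspace_minus: "csubspace M \<Longrightarrow> x \<in> M \<Longrightarrow> - x \<in> M"
  using csubspace_scaleR[of M x "-1"] by simp
lemma csubspace_diff: "csubspace M \<Longrightarrow> x \<in> M \<Longrightarrow> y \<in> M \<Longrightarrow> x - y \<in> M"
  using csubspace_add[of M x "-y"] csubspace_minus[of M y] by simp

lemma parallelogram:
  "(norm (a + b))\<^sup>2 + (norm (a - b))\<^sup>2 = 2 * (norm a)\<^sup>2 + 2 * (norm (b::'a::complex_inner))\<^sup>2"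
  using norm_add_sq[of a b] norm_add_sq[of a "-b"] by (simp add: cinner_minus_right)

lemma cauchy_from_bound:
  fixes X :: "nat \<Rightarrow> 'a::metric_space"
  assumes "\<And>i j. dist (X i) (X j) \<le> g i + g j" and "g \<longlonglongrightarrow> 0"
  shows "Cauchy X"
proof (rule metric_CauchyI)
  fix e :: real assume e: "0 < e"
  have "\<forall>\<^sub>F n in sequentially. dist (g n) 0 < e / 2"
    using tendstoD[OF assms(2), of "e/2"] e by simp
  then obtain N where N: "\<And>n. n \<ge> N \<Longrightarrow> \<bar>g n\<bar> < e / 2"
    by (auto simp: eventually_sequentially)
  show "\<exists>M. \<forall>m\<ge>M. \<forall>n\<ge>M. dist (X m) (X n) < e"
  proof (intro exI allI impI)
    fix m n assume "N \<le> m" "N \<le> n"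
    then show "dist (X m) (X n) < e" using N[of m] N[of n] assms(1)[of m n] by linarith
  qed
qed

lemma projection_exists:
  fixes M :: "'a::chilbert_space set"
  assumes cs: "csubspace M" and cl: "closed M"
  shows "\<exists>m\<in>M. \<forall>y\<in>M. cinner (x - m) y = 0"
proof -
  define d where "d = infdist x M"
  have Mne: "M \<noteq> {}" using csubspace_0[OF cs] by blast
  have d0: "0 \<le> d" unfolding d_def by (rule infdist_nonneg)
  have dle: "d \<le> norm (x - y)" if "y \<in> M" for y
    unfolding d_def using infdist_le[OF that, of x] by (simp add: dist_norm)
  have "\<exists>m\<in>M. norm (x - m) < d + 1 / (real n + 1)" for n
  proof -
    have "Inf ((\<lambda>a. dist x a) ` M) < d + 1 / (real n + 1)"
      using infdist_notempty[OF Mne, of x] unfolding d_def by simp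
    then obtain a where "a \<in> M" "dist x a < d + 1 / (real n + 1)"
      using cInf_lessD[of "(\<lambda>a. dist x a) ` M"] Mne by blast
    then show ?thesis by (auto simp: dist_norm)
  qed
  then obtain m where mM: "\<And>n. m n \<in> M" and md: "\<And>n. norm (x - m n) < d + 1 / (real n + 1)"
    by metis
  define e where "e n = 1 / (real n + 1)" for n
  have e0: "e \<longlonglongrightarrow> 0" unfolding e_def using LIMSEQ_inverse_real_of_nat by (simp add: inverse_eq_divide add.commute)
  have epos: "0 < e n" for n unfolding e_def by simp
  define g where "g n = sqrt (2 * ((d + e n)\<^sup>2 - d\<^sup>2))" for n
  have g0: "g \<longlonglongrightarrow> 0"
  proof -
    have "(\<lambda>n. 2 * ((d + e n)\<^sup>2 - d\<^sup>2)) \<longlonglongrightarrow> 2 * ((d + 0)\<^sup>2 - d\<^sup>2)"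
      by (intro tendsto_intros e0)
    then have "(\<lambda>n. sqrt (2 * ((d + e n)\<^sup>2 - d\<^sup>2))) \<longlonglongrightarrow> sqrt (2 * ((d + 0)\<^sup>2 - d\<^sup>2))"
      by (rule tendsto_real_sqrt)
    then show ?thesis unfolding g_def by simp
  qed
  have cauchy: "Cauchy m"
  proof (rule cauchy_from_bound[OF _ g0])
    fix i j
    let ?a = "x - m i" and ?b = "x - m j"
    have mid: "(1/2) *\<^sub>R (m i + m j) \<in> M"
      by (intro csubspace_scaleR[OF cs] csubspace_add[OF cs] mM)
    have "norm (2 *\<^sub>R (x - (1/2) *\<^sub>R (m i + m j))) \<ge> 2 * d"
      using dle[OF mid] by simp
    moreover have "?a + ?b = 2 *\<^sub>R (x - (1/2) *\<^sub>R (m i + m j))"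
      by (simp add: algebra_simps scaleR_add_right scaleR_2)
    ultimately have ab: "norm (?a + ?b) \<ge> 2 * d" by simp
    have "(norm (?a + ?b))\<^sup>2 + (norm (?a - ?b))\<^sup>2 = 2 * (norm ?a)\<^sup>2 + 2 * (norm ?b)\<^sup>2"
      by (rule parallelogram)
    moreover have "?a - ?b = m j - m i" by simp
    moreover have "(norm ?a)\<^sup>2 \<le> (d + e i)\<^sup>2"
      using md[of i] norm_ge_zero[of ?a] unfolding e_def by (intro power_mono) auto
    moreover have "(norm ?b)\<^sup>2 \<le> (d + e j)\<^sup>2"
      using md[of j] norm_ge_zero[of ?b] unfolding e_def by (intro power_mono) auto
    moreover have "(2 * d)\<^sup>2 \<le> (norm (?a + ?b))\<^sup>2"
      using ab d0 by (intro power_mono) auto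
    ultimately have sq: "(norm (m j - m i))\<^sup>2 \<le> 2 * ((d + e i)\<^sup>2 - d\<^sup>2) + 2 * ((d + e j)\<^sup>2 - d\<^sup>2)"
      by (simp add: power_mult_distrib)
    have nn: "0 \<le> 2 * ((d + e k)\<^sup>2 - d\<^sup>2)" for k
      using d0 epos[of k] by (simp add: power2_eq_square algebra_simps)
    have "dist (m i) (m j) = sqrt ((norm (m j - m i))\<^sup>2)"
      by (simp add: dist_norm norm_minus_commute)
    also have "\<dots> \<le> sqrt (2 * ((d + e i)\<^sup>2 - d\<^sup>2) + 2 * ((d + e j)\<^sup>2 - d\<^sup>2))"
      using sq by (rule real_sqrt_le_mono)
    also have "\<dots> \<le> g i + g j" unfolding g_def
      by (rule sqrt_add_le_add_sqrt[OF nn[of i] nn[of j]])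
    finally show "dist (m i) (m j) \<le> g i + g j" .
  qed
  then obtain m0 where lim: "m \<longlonglongrightarrow> m0" using Cauchy_convergent_iff convergent_def by blast
  have m0M: "m0 \<in> M" using closed_sequentially[OF cl] mM lim by blast
  have "(\<lambda>n. norm (x - m n)) \<longlonglongrightarrow> norm (x - m0)" by (intro tendsto_intros lim)
  moreover have "(\<lambda>n. d + e n) \<longlonglongrightarrow> d + 0" by (intro tendsto_intros e0)
  ultimately have nd: "norm (x - m0) \<le> d"
    using md unfolding e_def
    by (intro LIMSEQ_le[of "\<lambda>n. norm (x - m n)" _ "\<lambda>n. d + e n", simplified]) (auto simp: e_def less_imp_le)
  have minim: "norm (x - m0) \<le> norm (x - y)" if "y \<in> M" for y using nd dle[OF that] by simp
  show ?thesis
  proof (intro bexI[OF _ m0M] ballI)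
    fix y assume yM: "y \<in> M"
    define z where "z = x - m0"
    define c where "c = cinner z y"
    show "cinner (x - m0) y = 0"
    proof (rule ccontr)
      assume "cinner (x - m0) y \<noteq> 0"
      then have cne: "c \<noteq> 0" unfolding c_def z_def by simp
      then have yne: "y \<noteq> 0" unfolding c_def by auto
      define t where "t = 1 / ((norm y)\<^sup>2 + 1)"
      have tpos: "0 < t" unfolding t_def by (simp add: add_nonneg_pos)
      define a where "a = - (complex_of_real t * c)"
      have "m0 - a *\<^sub>C y \<in> M" by (intro csubspace_diff[OF cs] m0M csubspace_scaleC[OF cs] yM)
      moreover have "x - (m0 - a *\<^sub>C y) = z + a *\<^sub>C y" unfolding z_def by (simp add: algebra_simps)
      ultimately have "norm z \<le> norm (z + a *\<^sub>C y)" using minim unfolding z_def by metis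
      then have le: "(norm z)\<^sup>2 \<le> (norm (z + a *\<^sub>C y))\<^sup>2" by (simp add: power_mono)
      have "(norm (z + a *\<^sub>C y))\<^sup>2 = (norm z)\<^sup>2 + (cmod a * norm y)\<^sup>2 + 2 * Re (cnj a * c)"
        by (simp add: norm_add_sq norm_scaleC cinner_scaleC_right c_def)
      also have "cnj a * c = - complex_of_real (t * (cmod c)\<^sup>2)"
        unfolding a_def by (simp add: complex_mult_cnj cmod_power2 mult.commute mult.left_commute)
      also have "cmod a = t * cmod c" unfolding a_def using tpos by (simp add: norm_mult)
      finally have "(norm (z + a *\<^sub>C y))\<^sup>2 = (norm z)\<^sup>2 + t\<^sup>2 * (cmod c)\<^sup>2 * (norm y)\<^sup>2 - 2 * t * (cmod c)\<^sup>2"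
        by (simp add: power_mult_distrib)
      with le have "0 \<le> t\<^sup>2 * (cmod c)\<^sup>2 * (norm y)\<^sup>2 - 2 * t * (cmod c)\<^sup>2" by simp
      then have "0 \<le> t * (cmod c)\<^sup>2 * (t * (norm y)\<^sup>2 - 2)" by (simp add: power2_eq_square algebra_simps)
      moreover have "t * (norm y)\<^sup>2 < 1" unfolding t_def using zero_le_power2[of "norm y"] by (simp add: divide_less_eq add_nonneg_pos not_less)
      moreover have "0 < t * (cmod c)\<^sup>2" using tpos cne by simp
      ultimately show False by (simp add: zero_le_mult_iff)
    qed
  qed
qed

lemma proj_eqI:
  assumes cs: "csubspace M" and "m \<in> M" and "\<forall>y\<in>M. cinner (x - m) y = 0"
  shows "proj M x = m"
  unfolding proj_def
proof (rule the_equality)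
  show "m \<in> M \<and> (\<forall>y\<in>M. cinner (x - m) y = 0)" using assms by blast
  fix m' assume m': "m' \<in> M \<and> (\<forall>y\<in>M. cinner (x - m') y = 0)"
  have "m - m' \<in> M" using cs assms(2) m' by (simp add: csubspace_diff)
  then have "cinner (x - m') (m - m') = 0" "cinner (x - m) (m - m') = 0" using m' assms(3) by auto
  then have "cinner (m - m') (m - m') = 0" by (simp add: cinner_diff_left algebra_simps)
  then show "m' = m" using cinner_self_eq_zero[of "m - m'"] by simp
qed

context
  fixes M :: "'a::chilbert_space set"
  assumes cs: "csubspace M" and cl: "closed M"
begin

lemma proj_spec: "proj M x \<in> M \<and> (\<forall>y\<in>M. cinner (x - proj M x) y = 0)"
proof -
  obtain m where "m \<in> M" "\<forall>y\<in>M. cinner (x - m) y = 0" using projection_exists[OF cs cl] by blast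
  then show ?thesis using proj_eqI[OF cs] by simp
qed

lemma proj_in: "proj M x \<in> M" using proj_spec by blast
lemma proj_orth: "y \<in> M \<Longrightarrow> cinner (x - proj M x) y = 0" using proj_spec by blast
lemma proj_orth': "y \<in> M \<Longrightarrow> cinner y (x - proj M x) = 0"
  using proj_orth cinner_commute by (metis complex_cnj_zero)
lemma proj_orth_eq: "y \<in> M \<Longrightarrow> cinner x y = cinner (proj M x) y"
  using proj_orth[of y x] by (simp add: cinner_diff_left)
lemma proj_id: "x \<in> M \<Longrightarrow> proj M x = x" using proj_eqI[OF cs, of x x] by simp
lemma proj_idem: "proj M (proj M x) = proj M x" using proj_id proj_in by blast
lemma proj_zero_orth: "(\<forall>y\<in>M. cinner x y = 0) \<Longrightarrow> proj M x = 0"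
  using proj_eqI[OF cs, of 0 x] csubspace_0[OF cs] by simp

lemma proj_selfadj: "cinner (proj M x) y = cinner x (proj M y)"
proof -
  have "cinner (proj M x) y = cinner (proj M x) (proj M y) + cinner (proj M x) (y - proj M y)"
    by (simp add: cinner_diff_right)
  also have "cinner (proj M x) (y - proj M y) = 0" by (rule proj_orth'[OF proj_in])
  also have "cinner x (proj M y) = cinner (proj M x) (proj M y) + cinner (x - proj M x) (proj M y)"
    by (simp add: cinner_diff_left)
  moreover have "cinner (x - proj M x) (proj M y) = 0" by (rule proj_orth[OF proj_in])
  ultimately show ?thesis by simp
qed

lemma proj_add: "proj M (x + y) = proj M x + proj M y"
  by (rule proj_eqI[OF cs]) (auto simp: csubspace_add[OF cs] proj_in cinner_diff_left cinner_add_left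
      proj_orth_eq[of _ x] proj_orth_eq[of _ y])

lemma proj_scaleC: "proj M (c *\<^sub>C x) = c *\<^sub>C proj M x"
  by (rule proj_eqI[OF cs]) (auto simp: csubspace_scaleC[OF cs] proj_in cinner_diff_left cinner_scaleC_left
      proj_orth_eq[of _ x])

lemma proj_norm_sq: "(norm x)\<^sup>2 = (norm (proj M x))\<^sup>2 + (norm (x - proj M x))\<^sup>2"
proof -
  have "x = proj M x + (x - proj M x)" by simp
  then have "(norm x)\<^sup>2 = (norm (proj M x + (x - proj M x)))\<^sup>2" by simp
  also have "\<dots> = (norm (proj M x))\<^sup>2 + (norm (x - proj M x))\<^sup>2"
    by (rule pythag[OF proj_orth'[OF proj_in]])
  finally show ?thesis .
qed

lemma proj_norm: "norm (proj M x) \<le> norm x"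
  using proj_norm_sq[of x] by (metis le_add_same_cancel1 norm_ge_zero power2_le_iff_abs_le abs_norm_cancel zero_le_power2)

lemma cbounded_proj: "cbounded (proj M)"
  by (rule cboundedI[where K=1]) (auto simp: proj_add proj_scaleC proj_norm)

end

section \<open>Riesz representation and adjoints\<close>

lemma riesz:
  fixes f :: "'a::chilbert_space \<Rightarrow> complex"
  assumes add: "\<And>x y. f (x + y) = f x + f y" and scl: "\<And>c x. f (c *\<^sub>C x) = c * f x"
    and bd: "\<And>x. cmod (f x) \<le> norm x * K"
  shows "\<exists>z. \<forall>x. f x = cinner x z"
proof -
  have bl: "bounded_linear f"
  proof
    show "f (x + y) = f x + f y" for x y by (rule add)
    show "f (r *\<^sub>R x) = r *\<^sub>R f x" for r x using scl[of "complex_of_real r" x]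
      by (simp add: scaleR_scaleC scaleR_conv_of_real)
    show "\<exists>K. \<forall>x. norm (f x) \<le> norm x * K" using bd by auto
  qed
  define Ker where "Ker = {x. f x = 0}"
  have csK: "csubspace Ker" unfolding Ker_def csubspace_def
    using add scl linear_0[OF bounded_linear.linear[OF bl]] by auto
  have clK: "closed Ker" unfolding Ker_def
    using continuous_closed_vimage[of "{0}" f] linear_continuous_at[OF bl] by (auto simp: vimage_def)
  show ?thesis
  proof (cases "\<forall>x. f x = 0")
    case True then show ?thesis by (intro exI[of _ 0]) simp
  next
    case False
    then obtain u where u: "f u \<noteq> 0" by blast
    define w where "w = u - proj Ker u"
    have pK: "f (proj Ker u) = 0" using proj_in[OF csK clK, of u] unfolding Ker_def by simp
    have fw: "f w = f u" unfolding w_def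
      using add[of "u - proj Ker u" "proj Ker u"] pK by simp
    have worth: "\<And>y. y \<in> Ker \<Longrightarrow> cinner y w = 0" unfolding w_def by (rule proj_orth'[OF csK clK])
    have f0: "f 0 = 0" using linear_0[OF bounded_linear.linear[OF bl]] .
    have wne: "w \<noteq> 0" using fw u f0 by auto
    have nw: "(norm w)\<^sup>2 \<noteq> 0" using wne by simp
    show ?thesis
    proof (intro exI allI)
      fix x
      define v where "v = f x *\<^sub>C w - f w *\<^sub>C x"
      have "f v = f (f x *\<^sub>C w) - f (f w *\<^sub>C x)" unfolding v_def
        using linear_diff[OF bounded_linear.linear[OF bl]] .
      then have "f v = 0" by (simp add: scl)
      then have "cinner v w = 0" using worth unfolding Ker_def by auto
      then have "f x * complex_of_real ((norm w)\<^sup>2) = f w * cinner x w"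
        unfolding v_def by (simp add: cinner_diff_left cinner_scaleC_left cinner_self)
      then have "f x = f w * cinner x w / complex_of_real ((norm w)\<^sup>2)"
        using nw by (simp add: field_simps)
      also have "\<dots> = cinner x ((cnj (f w) / complex_of_real ((norm w)\<^sup>2)) *\<^sub>C w)"
        by (simp add: cinner_scaleC_right)
      finally show "f x = cinner x ((cnj (f w) / complex_of_real ((norm w)\<^sup>2)) *\<^sub>C w)" .
    qed
  qed
qed

lemma adj_eqI: "(\<And>x y. cinner (T x) y = cinner x (S y)) \<Longrightarrow> adj T = S"
  unfolding adj_def
proof (rule the_equality)
  assume h: "\<And>x y. cinner (T x) y = cinner x (S y)"
  then show "\<forall>x y. cinner (T x) y = cinner x (S y)" by blast
  fix S' assume "\<forall>x y. cinner (T x) y = cinner x (S' y)"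
  then show "S' = S" using h by (intro ext cinner_ext_right) metis
qed

context
  fixes T :: "'a::chilbert_space \<Rightarrow> 'a"
  assumes cb: "cbounded T"
begin

lemma adj_exists: "\<exists>S. \<forall>x y. cinner (T x) y = cinner x (S y)"
proof -
  have "\<exists>z. \<forall>x. cinner (T x) y = cinner x z" for y
  proof (rule riesz[where K = "onorm T * norm y"])
    show "cinner (T (x + x')) y = cinner (T x) y + cinner (T x') y" for x x'
      by (simp add: cb_add[OF cb] cinner_add_left)
    show "cinner (T (c *\<^sub>C x)) y = c * cinner (T x) y" for c x
      by (simp add: cb_scaleC[OF cb] cinner_scaleC_left)
    show "cmod (cinner (T x) y) \<le> norm x * (onorm T * norm y)" for x
    proof -
      have "cmod (cinner (T x) y) \<le> norm (T x) * norm y" by (rule cauchy_schwarz)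
      also have "\<dots> \<le> onorm T * norm x * norm y" by (intro mult_right_mono cb_norm[OF cb]) auto
      finally show ?thesis by (simp add: algebra_simps)
    qed
  qed
  then show ?thesis by metis
qed

lemma adj_prop: "cinner (T x) y = cinner x (adj T y)"
proof -
  obtain S where S: "\<forall>x y. cinner (T x) y = cinner x (S y)" using adj_exists by blast
  then have "adj T = S" by (intro adj_eqI) blast
  then show ?thesis using S by simp
qed

lemma adj_prop2: "cinner (adj T y) x = cinner y (T x)"
  by (metis adj_prop cinner_commute)

lemma cbounded_adj: "cbounded (adj T)"
proof (rule cboundedI[where K = "onorm T"])
  show "adj T (x + y) = adj T x + adj T y" for x y
    by (rule cinner_ext_right) (simp add: adj_prop[symmetric] cinner_add_right)
  show "adj T (c *\<^sub>C x) = c *\<^sub>C adj T x" for c x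
    by (rule cinner_ext_right) (simp add: adj_prop[symmetric] cinner_scaleC_right)
  show "norm (adj T y) \<le> norm y * onorm T" for y
  proof -
    have "(norm (adj T y))\<^sup>2 = Re (cinner (T (adj T y)) y)"
      by (simp add: norm_sq_cinner adj_prop)
    also have "\<dots> \<le> cmod (cinner (T (adj T y)) y)" by (rule complex_Re_le_cmod)
    also have "\<dots> \<le> norm (T (adj T y)) * norm y" by (rule cauchy_schwarz)
    also have "\<dots> \<le> onorm T * norm (adj T y) * norm y" by (intro mult_right_mono cb_norm[OF cb]) auto
    finally have *: "(norm (adj T y))\<^sup>2 \<le> onorm T * norm (adj T y) * norm y" .
    show ?thesis
    proof (cases "norm (adj T y) = 0")
      case True then show ?thesis using cb_onorm_nonneg[OF cb] by simp
    next
      case False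
      then have "0 < norm (adj T y)" by simp
      with * show ?thesis by (simp add: power2_eq_square algebra_simps)
    qed
  qed
qed

lemma adj_adj: "adj (adj T) = T"
  by (rule adj_eqI) (simp add: adj_prop2)

end

lemma adj_comp:
  fixes S T :: "'a::chilbert_space \<Rightarrow> 'a"
  assumes "cbounded S" "cbounded T"
  shows "adj (\<lambda>x. S (T x)) = (\<lambda>y. adj T (adj S y))"
  by (rule adj_eqI) (simp add: adj_prop[OF assms(1)] adj_prop[OF assms(2)])

lemma adj_funpow:
  fixes T :: "'a::chilbert_space \<Rightarrow> 'a"
  assumes cb: "cbounded T"
  shows "adj (T ^^ n) = adj T ^^ n"
proof (induction n)
  case 0
  show ?case by (rule adj_eqI) simp
next
  case (Suc n)
  have "adj (T ^^ Suc n) = adj (\<lambda>x. T ((T ^^ n) x))" by (simp add: comp_def)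
  also have "\<dots> = (\<lambda>y. adj (T ^^ n) (adj T y))" by (rule adj_comp[OF cb cbounded_funpow[OF cb]])
  also have "\<dots> = adj T ^^ Suc n" using Suc by (simp only: funpow_Suc_right comp_def)
  finally show ?case .
qed

lemma adj_selfI: "(\<And>x y. cinner (A x) y = cinner x (A y)) \<Longrightarrow> adj A = A"
  by (rule adj_eqI)


instance chilbert_space \<subseteq> banach ..

section \<open>Positive operators\<close>

lemma opos_cb: "opos A \<Longrightarrow> cbounded A" unfolding opos_def by blast
lemma opos_Im: "opos A \<Longrightarrow> Im (cinner (A x) x) = 0" unfolding opos_def by blast
lemma opos_Re: "opos A \<Longrightarrow> 0 \<le> Re (cinner (A x) x)" unfolding opos_def by blast
lemma opos_real: "opos A \<Longrightarrow> cinner (A x) x = complex_of_real (Re (cinner (A x) x))"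
  using opos_Im[of A x] by (simp add: complex_eq_iff)

lemma opos_selfadj:
  fixes A :: "'a::complex_inner \<Rightarrow> 'a"
  assumes "opos A"
  shows "cinner (A x) y = cinner x (A y)"
proof -
  have cb: "cbounded A" using assms by (rule opos_cb)
  define a where "a = cinner (A x) y"
  define b where "b = cinner (A y) x"
  have "Im (cinner (A (x + y)) (x + y)) = 0" by (rule opos_Im[OF assms])
  then have i1: "Im a + Im b = 0"
    using opos_Im[OF assms, of x] opos_Im[OF assms, of y]
    by (simp add: cb_add[OF cb] cinner_add_left cinner_add_right a_def b_def)
  have "Im (cinner (A (x + \<i> *\<^sub>C y)) (x + \<i> *\<^sub>C y)) = 0" by (rule opos_Im[OF assms])
  then have "Im (cinner (A x) x + cnj \<i> * a + \<i> * b + \<i> * cnj \<i> * cinner (A y) y) = 0"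
    by (simp add: cb_add[OF cb] cb_scaleC[OF cb] cinner_add_left cinner_add_right cinner_scaleC_left
        cinner_scaleC_right a_def b_def algebra_simps)
  then have i2: "Re b - Re a = 0"
    using opos_Im[OF assms, of x] opos_Im[OF assms, of y] by simp
  have "a = cnj b" using i1 i2 by (simp add: complex_eq_iff)
  then show ?thesis unfolding a_def b_def by (metis cinner_commute)
qed

lemma opos_adj: "opos A \<Longrightarrow> adj A = A"
  by (rule adj_eqI) (rule opos_selfadj)

lemma opos_cs:
  fixes A :: "'a::complex_inner \<Rightarrow> 'a"
  assumes "opos A"
  shows "(cmod (cinner (A x) y))\<^sup>2 \<le> Re (cinner (A x) x) * Re (cinner (A y) y)"
proof (rule cs_form[of "\<lambda>x y. cinner (A x) y"])
  have cb: "cbounded A" using assms by (rule opos_cb)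
  show "cinner (A (x + y)) z = cinner (A x) z + cinner (A y) z" for x y z
    by (simp add: cb_add[OF cb] cinner_add_left)
  show "cinner (A (a *\<^sub>C x)) y = a * cinner (A x) y" for a x y
    by (simp add: cb_scaleC[OF cb] cinner_scaleC_left)
  show "cinner (A x) y = cnj (cinner (A y) x)" for x y
    by (metis opos_selfadj[OF assms] cinner_commute)
  show "Im (cinner (A x) x) = 0 \<and> 0 \<le> Re (cinner (A x) x)" for x
    using assms unfolding opos_def by blast
qed

lemma opos_zero_form:
  fixes A :: "'a::complex_inner \<Rightarrow> 'a"
  assumes "opos A" and "Re (cinner (A x) x) \<le> 0"
  shows "A x = 0"
proof -
  have "Re (cinner (A x) x) = 0" using assms opos_Re[OF assms(1), of x] by simp
  then have "(cmod (cinner (A x) (A x)))\<^sup>2 \<le> 0" using opos_cs[OF assms(1), of x "A x"] by simp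
  then have "cinner (A x) (A x) = 0" by simp
  then show ?thesis using cinner_self_eq_zero[of "A x"] by simp
qed

lemma opos_contr:
  fixes A :: "'a::complex_inner \<Rightarrow> 'a"
  assumes "opos A" and le: "\<And>x. Re (cinner (A x) x) \<le> (norm x)\<^sup>2"
  shows "norm (A x) \<le> norm x"
proof -
  have "(cmod (cinner (A x) (A x)))\<^sup>2 \<le> Re (cinner (A x) x) * Re (cinner (A (A x)) (A x))"
    by (rule opos_cs[OF assms(1)])
  also have "\<dots> \<le> (norm x)\<^sup>2 * (norm (A x))\<^sup>2"
    by (intro mult_mono le opos_Re[OF assms(1)]) auto
  moreover have "cmod (cinner (A x) (A x)) = (norm (A x))\<^sup>2"
    by (simp only: cinner_self norm_of_real) simp
  ultimately have "((norm (A x))\<^sup>2)\<^sup>2 \<le> (norm x)\<^sup>2 * (norm (A x))\<^sup>2"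
    by simp
  then have "(norm (A x))\<^sup>2 \<le> (norm x)\<^sup>2"
    by (cases "norm (A x) = 0") (auto simp: power2_eq_square)
  then show ?thesis by (simp add: power2_le_iff_abs_le)
qed

section \<open>Coefficients of the square root series\<close>

fun cc :: "nat \<Rightarrow> real" where
  "cc n = (if n = 0 then 0 else if n = 1 then 1/2 else (\<Sum>i\<in>{1..<n}. cc i * cc (n - i)) / 2)"

declare cc.simps[simp del]

lemma cc_0[simp]: "cc 0 = 0" by (simp add: cc.simps)
lemma cc_1[simp]: "cc 1 = 1/2" by (simp add: cc.simps)
lemma cc_Suc0[simp]: "cc (Suc 0) = 1/2" by (simp add: cc.simps)

lemma cc_nonneg: "0 \<le> cc n"
proof (induction n rule: less_induct)
  case (less n)
  then show ?case by (subst cc.simps) (auto intro!: sum_nonneg)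
qed

lemma cc_conv: "(\<Sum>i\<le>n. cc i * cc (n - i)) = 2 * cc n - (if n = 1 then 1 else 0)"
proof -
  consider "n = 0" | "n = 1" | "n \<ge> 2" by linarith
  then show ?thesis
  proof cases
    case 3
    have "{..n} = insert 0 (insert n {1..<n})" using 3 by auto
    then have "(\<Sum>i\<le>n. cc i * cc (n - i)) = (\<Sum>i\<in>{1..<n}. cc i * cc (n - i))"
      using 3 by simp
    also have "\<dots> = 2 * cc n" using 3 by (subst (2) cc.simps) simp
    finally show ?thesis using 3 by simp
  qed (auto simp: atMost_Suc)
qed


definition ss :: "nat \<Rightarrow> real" where "ss N = (\<Sum>k<N. cc k)"

lemma ss_nonneg: "0 \<le> ss N" unfolding ss_def by (intro sum_nonneg cc_nonneg)

lemma tri_sum: "(\<Sum>(i,j)\<in>{(i,j). i + j < N}. cc i * cc j) = 2 * ss N - (if N \<ge> 2 then 1 else 0)"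
proof -
  have "(\<Sum>(i,j)\<in>{(i,j). i + j < N}. cc i * cc j) = (\<Sum>n<N. \<Sum>i\<le>n. cc i * cc (n - i))"
    by (rule sum.triangle_reindex)
  also have "\<dots> = (\<Sum>n<N. 2 * cc n - (if n = 1 then 1 else 0))" by (simp add: cc_conv)
  also have "\<dots> = 2 * ss N - (\<Sum>n<N. (if n = 1 then 1 else 0))"
    by (simp add: sum_subtractf ss_def sum_distrib_left)
  also have "(\<Sum>n<N. (if n = 1 then 1 else 0::real)) = (if N \<ge> 2 then 1 else 0)"
    by (simp add: sum.delta)
  finally show ?thesis .
qed

lemma sq_sum: "(\<Sum>(i,j)\<in>{..<N} \<times> {..<N}. cc i * cc j) = (ss N)\<^sup>2"
  by (simp add: ss_def power2_eq_square sum_product sum.cartesian_product)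

lemma tri_sub_sq: "{(i,j). i + j < N} \<subseteq> {..<N} \<times> {..<(N::nat)}" by auto

lemma ss_le1: "ss N \<le> 1"
proof (induction N)
  case 0 then show ?case by (simp add: ss_def)
next
  case (Suc N)
  show ?case
  proof (cases "N = 0")
    case True then show ?thesis by (simp add: ss_def)
  next
    case False
    let ?f = "\<lambda>(i,j). cc i * cc j"
    have "(\<Sum>(i,j)\<in>{(i,j). i + j < Suc N}. cc i * cc j)
        = (\<Sum>(i,j)\<in>{(i,j). i + j < Suc N} \<inter> ({..<N} \<times> {..<N}). cc i * cc j)"
    proof (rule sum.mono_neutral_right)
      show "finite {(i,j). i + j < Suc N}"
        by (rule finite_subset[OF tri_sub_sq]) auto
      show "\<forall>p\<in>{(i,j). i + j < Suc N} - {(i,j). i + j < Suc N} \<inter> ({..<N} \<times> {..<N}). ?f p = 0"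
      proof (intro ballI)
        fix p assume "p \<in> {(i,j). i + j < Suc N} - {(i,j). i + j < Suc N} \<inter> ({..<N} \<times> {..<N})"
        then obtain a b where p: "p = (a,b)" "a + b < Suc N" "\<not> a < N \<or> \<not> b < N" by auto
        then have "a = 0 \<or> b = 0" by auto
        then show "?f p = 0" using p by auto
      qed
    qed auto
    also have "\<dots> \<le> (\<Sum>(i,j)\<in>{..<N} \<times> {..<N}. cc i * cc j)"
      by (rule sum_mono2) (auto intro: mult_nonneg_nonneg cc_nonneg)
    also have "\<dots> = (ss N)\<^sup>2" by (rule sq_sum)
    also have "\<dots> \<le> 1" using Suc ss_nonneg[of N] by (simp add: power_le_one)
    finally show ?thesis using False by (simp add: tri_sum)
  qed
qed

lemma ss_mono: "m \<le> n \<Longrightarrow> ss m \<le> ss n"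
  unfolding ss_def by (rule sum_mono2) (auto intro: cc_nonneg)

lemma cc_summable: "summable cc"
  by (rule summableI_nonneg_bounded[where x=1]) (auto simp: cc_nonneg ss_le1[unfolded ss_def])

lemma cc_suminf: "suminf cc = 1"
proof -
  define S where "S = suminf cc"
  have lim: "ss \<longlonglongrightarrow> S" unfolding ss_def S_def by (rule summable_LIMSEQ[OF cc_summable])
  have le: "ss N \<le> S" for N unfolding ss_def S_def
    by (rule sum_le_suminf[OF cc_summable]) (auto simp: cc_nonneg)
  have "(ss h)\<^sup>2 \<le> 2 * S - 1" if "h \<ge> 1" for h
  proof -
    have "(ss h)\<^sup>2 = (\<Sum>(i,j)\<in>{..<h} \<times> {..<h}. cc i * cc j)" by (rule sq_sum[symmetric])
    also have "\<dots> \<le> (\<Sum>(i,j)\<in>{(i,j). i + j < 2 * h}. cc i * cc j)"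
      by (rule sum_mono2) (auto intro: mult_nonneg_nonneg cc_nonneg finite_subset[OF tri_sub_sq])
    also have "\<dots> = 2 * ss (2 * h) - 1" using that by (simp add: tri_sum)
    also have "\<dots> \<le> 2 * S - 1" using le[of "2*h"] by simp
    finally show ?thesis .
  qed
  moreover have "(\<lambda>h. (ss h)\<^sup>2) \<longlonglongrightarrow> S\<^sup>2" by (intro tendsto_intros lim)
  ultimately have "S\<^sup>2 \<le> 2 * S - 1"
    by (intro LIMSEQ_le_const2[of "\<lambda>h. (ss h)\<^sup>2"]) auto
  then have "(S - 1)\<^sup>2 \<le> 0" by (simp add: power2_eq_square algebra_simps)
  then show ?thesis unfolding S_def by simp
qed

lemma ss_lim: "ss \<longlonglongrightarrow> 1"
  using summable_LIMSEQ[OF cc_summable] cc_suminf unfolding ss_def by simp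

lemma rest_sum: "N \<ge> 2 \<Longrightarrow>
   (\<Sum>(i,j)\<in>({..<N} \<times> {..<N}) - {(i,j). i + j < N}. cc i * cc j) = (1 - ss N)\<^sup>2"
proof -
  assume N: "N \<ge> 2"
  have "(\<Sum>(i,j)\<in>({..<N} \<times> {..<N}) - {(i,j). i + j < N}. cc i * cc j)
      = (\<Sum>(i,j)\<in>{..<N} \<times> {..<N}. cc i * cc j) - (\<Sum>(i,j)\<in>{(i,j). i + j < N}. cc i * cc j)"
    by (rule sum_diff) (auto intro: tri_sub_sq[THEN subsetD])
  also have "\<dots> = (1 - ss N)\<^sup>2" using N by (simp add: sq_sum tri_sum power2_eq_square algebra_simps)
  finally show ?thesis .
qed


section \<open>Square roots of positive operators\<close>

definition sqK :: "('a::complex_inner \<Rightarrow> 'a) \<Rightarrow> real" where "sqK A = onorm A + 1"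
definition sqQ :: "('a::complex_inner \<Rightarrow> 'a) \<Rightarrow> 'a \<Rightarrow> 'a" where
  "sqQ A = (\<lambda>x. x - (1 / sqK A) *\<^sub>R A x)"
definition sqF :: "('a::complex_inner \<Rightarrow> 'a) \<Rightarrow> 'a \<Rightarrow> 'a" where
  "sqF A = (\<lambda>x. \<Sum>k. cc k *\<^sub>R (sqQ A ^^ k) x)"
definition sqG :: "('a::complex_inner \<Rightarrow> 'a) \<Rightarrow> nat \<Rightarrow> 'a \<Rightarrow> 'a" where
  "sqG A N = (\<lambda>x. \<Sum>k<N. cc k *\<^sub>R (sqQ A ^^ k) x)"
definition sqS :: "('a::complex_inner \<Rightarrow> 'a) \<Rightarrow> 'a \<Rightarrow> 'a" where
  "sqS A = (\<lambda>x. x - sqF A x)"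
definition sqR :: "('a::complex_inner \<Rightarrow> 'a) \<Rightarrow> 'a \<Rightarrow> 'a" where
  "sqR A = (\<lambda>x. sqrt (sqK A) *\<^sub>R sqS A x)"

context
  fixes A :: "'a::chilbert_space \<Rightarrow> 'a"
  assumes Apos: "opos A"
begin

private abbreviation "K \<equiv> sqK A"
private abbreviation "Q \<equiv> sqQ A"

lemma cbA: "cbounded A" using Apos by (rule opos_cb)

lemma K_pos: "0 < sqK A"
  unfolding sqK_def using cb_onorm_nonneg[OF cbA] by simp

lemma Q_cb: "cbounded (sqQ A)"
  unfolding sqQ_def by (intro cbounded_diff cbounded_id cbounded_scaleR cbA)

lemma A_form_le: "Re (cinner (A x) x) \<le> sqK A * (norm x)\<^sup>2"
proof -
  have "Re (cinner (A x) x) \<le> cmod (cinner (A x) x)" by (rule complex_Re_le_cmod)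
  also have "\<dots> \<le> norm (A x) * norm x" by (rule cauchy_schwarz)
  also have "\<dots> \<le> onorm A * norm x * norm x" by (intro mult_right_mono cb_norm[OF cbA]) auto
  also have "\<dots> \<le> sqK A * (norm x)\<^sup>2" unfolding sqK_def by (simp add: power2_eq_square algebra_simps)
  finally show ?thesis .
qed

lemma Q_form: "cinner (Q x) x = complex_of_real ((norm x)\<^sup>2) - complex_of_real (1 / K) * cinner (A x) x"
  unfolding sqQ_def by (simp add: cinner_diff_left cinner_scaleR_left cinner_self)

lemma Q_pos: "opos Q"
  unfolding opos_def
proof (intro conjI allI Q_cb)
  fix x
  show "Im (cinner (Q x) x) = 0" using opos_Im[OF Apos, of x] by (simp add: Q_form)
  have "Re (cinner (A x) x) / K \<le> (norm x)\<^sup>2" using A_form_le[of x] K_pos by (simp add: divide_le_eq mult.commute)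
  then show "0 \<le> Re (cinner (Q x) x)" by (simp add: Q_form)
qed

lemma Q_le: "Re (cinner (Q x) x) \<le> (norm x)\<^sup>2"
  using opos_Re[OF Apos, of x] K_pos by (simp add: Q_form)

lemma Q_contr: "norm (Q x) \<le> norm x"
  by (rule opos_contr[OF Q_pos Q_le])

lemma Qk_cb: "cbounded (Q ^^ k)" by (rule cbounded_funpow[OF Q_cb])

lemma Qk_contr: "norm ((Q ^^ k) x) \<le> norm x"
proof (induction k)
  case (Suc k) then show ?case using Q_contr[of "(Q ^^ k) x"] by simp
qed simp

lemma Qk_selfadj: "cinner ((Q ^^ k) x) y = cinner x ((Q ^^ k) y)"
proof (induction k arbitrary: y)
  case (Suc k)
  have "cinner ((Q ^^ Suc k) x) y = cinner ((Q ^^ k) x) (Q y)"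
    using opos_selfadj[OF Q_pos] by simp
  also have "\<dots> = cinner x ((Q ^^ k) (Q y))" by (rule Suc)
  also have "(Q ^^ k) (Q y) = (Q ^^ Suc k) y" by (simp only: funpow_Suc_right comp_def)
  finally show ?case .
qed simp

lemma Qk_Im: "Im (cinner ((Q ^^ k) x) x) = 0"
proof -
  have "cinner ((Q ^^ k) x) x = cnj (cinner ((Q ^^ k) x) x)"
    by (subst (2) cinner_commute) (simp add: Qk_selfadj)
  then show ?thesis by (metis Reals_cnj_iff complex_is_Real_iff)
qed

lemma Qk_Re_le: "Re (cinner ((Q ^^ k) x) x) \<le> (norm x)\<^sup>2"
proof -
  have "Re (cinner ((Q ^^ k) x) x) \<le> cmod (cinner ((Q ^^ k) x) x)" by (rule complex_Re_le_cmod)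
  also have "\<dots> \<le> norm ((Q ^^ k) x) * norm x" by (rule cauchy_schwarz)
  also have "\<dots> \<le> norm x * norm x" by (intro mult_right_mono Qk_contr) auto
  finally show ?thesis by (simp add: power2_eq_square)
qed

lemma Q_comm:
  assumes U: "cbounded U" and c: "\<And>x. U (A x) = A (U x)"
  shows "U ((Q ^^ k) x) = (Q ^^ k) (U x)"
proof (induction k)
  case (Suc k)
  have "U (Q y) = Q (U y)" for y unfolding sqQ_def by (simp add: cb_diff[OF U] cb_scaleR[OF U] c)
  then show ?case using Suc by simp
qed simp

lemma ser_summable: "summable (\<lambda>k. cc k *\<^sub>R (Q ^^ k) x)"
proof (rule summable_comparison_test'[where g = "\<lambda>k. cc k * norm x" and N = 0])
  show "summable (\<lambda>k. cc k * norm x)" by (rule summable_mult2[OF cc_summable])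
  show "norm (cc k *\<^sub>R (Q ^^ k) x) \<le> cc k * norm x" for k
    using Qk_contr[of k x] cc_nonneg[of k] by (simp add: mult_left_mono)
qed

lemma F_add: "sqF A (x + y) = sqF A x + sqF A y"
  unfolding sqF_def
  by (simp add: cb_add[OF Qk_cb] scaleR_add_right suminf_add[OF ser_summable ser_summable])

lemma F_scaleC: "sqF A (c *\<^sub>C x) = c *\<^sub>C sqF A x"
proof -
  have e: "cc k *\<^sub>R (Q ^^ k) (c *\<^sub>C x) = c *\<^sub>C (cc k *\<^sub>R (Q ^^ k) x)" for k
    by (simp add: cb_scaleC[OF Qk_cb] scaleR_scaleC scaleC_scaleC mult.commute)
  show ?thesis
    unfolding sqF_def e by (rule bounded_linear.suminf[OF bounded_linear_scaleC ser_summable, symmetric])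
qed

lemma F_norm: "norm (sqF A x) \<le> norm x"
proof -
  have s: "summable (\<lambda>k. norm (cc k *\<^sub>R (Q ^^ k) x))"
    by (rule summable_comparison_test'[where g = "\<lambda>k. cc k * norm x" and N = 0])
       (auto simp: summable_mult2[OF cc_summable] cc_nonneg Qk_contr mult_left_mono)
  have "norm (sqF A x) \<le> (\<Sum>k. norm (cc k *\<^sub>R (Q ^^ k) x))"
    unfolding sqF_def by (rule summable_norm[OF s])
  also have "\<dots> \<le> (\<Sum>k. cc k * norm x)"
    by (rule suminf_le[OF _ s summable_mult2[OF cc_summable]])
       (simp add: cc_nonneg Qk_contr mult_left_mono)
  also have "\<dots> = norm x" by (simp add: suminf_mult2[OF cc_summable, symmetric] cc_suminf)
  finally show ?thesis .
qed

lemma F_cb: "cbounded (sqF A)"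
  by (rule cboundedI[where K=1]) (auto simp: F_add F_scaleC F_norm)

lemma F_comm:
  assumes U: "cbounded U" and c: "\<And>x. U (A x) = A (U x)"
  shows "U (sqF A x) = sqF A (U x)"
  unfolding sqF_def
  by (simp add: bounded_linear.suminf[OF cb_bl[OF U] ser_summable] cb_scaleR[OF U] Q_comm[OF U c])

lemma F_form: "Im (cinner (sqF A x) x) = 0 \<and> Re (cinner (sqF A x) x) \<le> (norm x)\<^sup>2"
proof -
  let ?v = "\<lambda>k. cc k *\<^sub>R (Q ^^ k) x"
  have s1: "summable (\<lambda>k. cinner (?v k) x)"
    by (rule bounded_linear.summable[OF bounded_linear_cinner_left ser_summable])
  have e: "cinner (sqF A x) x = (\<Sum>k. cinner (?v k) x)"
    unfolding sqF_def by (rule bounded_linear.suminf[OF bounded_linear_cinner_left ser_summable])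
  have "Im (\<Sum>k. cinner (?v k) x) = (\<Sum>k. Im (cinner (?v k) x))"
    by (rule bounded_linear.suminf[OF bounded_linear_Im s1])
  also have "\<dots> = 0" by (simp add: cinner_scaleR_left Qk_Im)
  finally have im: "Im (cinner (sqF A x) x) = 0" using e by simp
  have s2: "summable (\<lambda>k. Re (cinner (?v k) x))"
    by (rule bounded_linear.summable[OF bounded_linear_Re s1])
  have "Re (\<Sum>k. cinner (?v k) x) = (\<Sum>k. Re (cinner (?v k) x))"
    by (rule bounded_linear.suminf[OF bounded_linear_Re s1])
  also have "\<dots> \<le> (\<Sum>k. cc k * (norm x)\<^sup>2)"
    by (rule suminf_le[OF _ s2 summable_mult2[OF cc_summable]])
       (simp add: cinner_scaleR_left cc_nonneg Qk_Re_le mult_left_mono)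
  also have "\<dots> = (norm x)\<^sup>2" by (simp add: suminf_mult2[OF cc_summable, symmetric] cc_suminf)
  finally show ?thesis using e im by simp
qed

lemma S_cb: "cbounded (sqS A)"
  unfolding sqS_def by (intro cbounded_diff cbounded_id F_cb)

lemma S_pos: "opos (sqS A)"
  unfolding opos_def
proof (intro conjI allI S_cb)
  fix x
  show "Im (cinner (sqS A x) x) = 0" "0 \<le> Re (cinner (sqS A x) x)"
    using F_form[of x] by (simp_all add: sqS_def cinner_diff_left cinner_self)
qed

lemma S_comm:
  assumes U: "cbounded U" and c: "\<And>x. U (A x) = A (U x)"
  shows "U (sqS A x) = sqS A (U x)"
  unfolding sqS_def by (simp add: cb_diff[OF U] F_comm[OF U c])

lemma G_lim: "(\<lambda>N. sqG A N x) \<longlonglongrightarrow> sqF A x"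
  unfolding sqG_def sqF_def by (rule summable_LIMSEQ[OF ser_summable])

lemma G_diff: "sqG A N (x - y) = sqG A N x - sqG A N y"
  unfolding sqG_def by (simp add: cb_diff[OF Qk_cb] scaleR_diff_right sum_subtractf)

lemma G_norm: "norm (sqG A N x) \<le> norm x"
proof -
  have "norm (sqG A N x) \<le> (\<Sum>k<N. norm (cc k *\<^sub>R (Q ^^ k) x))" unfolding sqG_def by (rule norm_sum)
  also have "\<dots> \<le> (\<Sum>k<N. cc k * norm x)"
    by (intro sum_mono) (simp add: cc_nonneg Qk_contr mult_left_mono)
  also have "\<dots> = ss N * norm x" by (simp add: ss_def sum_distrib_right)
  also have "\<dots> \<le> norm x" using ss_le1[of N] ss_nonneg[of N] by (simp add: mult_left_le_one_le)
  finally show ?thesis .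
qed

lemma GG: "sqG A N (sqG A N x) = (\<Sum>(i,j)\<in>{..<N} \<times> {..<N}. (cc i * cc j) *\<^sub>R (Q ^^ (i + j)) x)"
proof -
  have "sqG A N (sqG A N x) = (\<Sum>i<N. \<Sum>j<N. (cc i * cc j) *\<^sub>R (Q ^^ (i + j)) x)"
    unfolding sqG_def
    by (simp add: cb_sum[OF Qk_cb] cb_scaleR[OF Qk_cb] scaleR_sum_right funpow_add)
  also have "\<dots> = (\<Sum>(i,j)\<in>{..<N} \<times> {..<N}. (cc i * cc j) *\<^sub>R (Q ^^ (i + j)) x)"
    by (rule sum.cartesian_product)
  finally show ?thesis .
qed

lemma tri_vec: "N \<ge> 2 \<Longrightarrow>
  (\<Sum>(i,j)\<in>{(i,j). i + j < N}. (cc i * cc j) *\<^sub>R (Q ^^ (i + j)) x) = 2 *\<^sub>R sqG A N x - Q x"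
proof -
  assume N: "N \<ge> 2"
  have "(\<Sum>(i,j)\<in>{(i,j). i + j < N}. (cc i * cc j) *\<^sub>R (Q ^^ (i + j)) x)
      = (\<Sum>n<N. \<Sum>i\<le>n. (cc i * cc (n - i)) *\<^sub>R (Q ^^ (i + (n - i))) x)"
    by (rule sum.triangle_reindex)
  also have "\<dots> = (\<Sum>n<N. (\<Sum>i\<le>n. cc i * cc (n - i)) *\<^sub>R (Q ^^ n) x)"
    by (intro sum.cong refl) (simp add: scaleR_sum_left)
  also have "\<dots> = (\<Sum>n<N. (2 * cc n) *\<^sub>R (Q ^^ n) x - (if n = 1 then Q x else 0))"
    by (intro sum.cong refl) (auto simp: cc_conv scaleR_diff_left)
  also have "\<dots> = 2 *\<^sub>R sqG A N x - (\<Sum>n<N. (if n = 1 then Q x else 0))"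
    unfolding sqG_def by (simp add: sum_subtractf scaleR_sum_right)
  also have "(\<Sum>n<N. (if n = 1 then Q x else 0)) = Q x" using N by (simp add: sum.delta)
  finally show ?thesis .
qed

lemma PP_eq: "N \<ge> 2 \<Longrightarrow>
  (x - sqG A N x) - sqG A N (x - sqG A N x) = (x - Q x) +
     (\<Sum>(i,j)\<in>({..<N} \<times> {..<N}) - {(i,j). i + j < N}. (cc i * cc j) *\<^sub>R (Q ^^ (i + j)) x)"
proof -
  assume N: "N \<ge> 2"
  let ?w = "\<lambda>(i,j). (cc i * cc j) *\<^sub>R (Q ^^ (i + j)) x"
  have "sqG A N (sqG A N x) = (\<Sum>p\<in>({..<N} \<times> {..<N}) - {(i,j). i + j < N}. ?w p) + (\<Sum>p\<in>{(i,j). i + j < N}. ?w p)"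
    unfolding GG by (rule sum.subset_diff[OF tri_sub_sq]) auto
  also have "(\<Sum>p\<in>{(i,j). i + j < N}. ?w p) = 2 *\<^sub>R sqG A N x - Q x" using tri_vec[OF N] by simp
  finally have "sqG A N (sqG A N x) = (\<Sum>p\<in>({..<N} \<times> {..<N}) - {(i,j). i + j < N}. ?w p) + (2 *\<^sub>R sqG A N x - Q x)" .
  then show ?thesis by (simp add: G_diff scaleR_2 algebra_simps)
qed

lemma rest_norm: "N \<ge> 2 \<Longrightarrow>
  norm (\<Sum>(i,j)\<in>({..<N} \<times> {..<N}) - {(i,j). i + j < N}. (cc i * cc j) *\<^sub>R (Q ^^ (i + j)) x)
    \<le> (1 - ss N)\<^sup>2 * norm x"
proof -
  assume N: "N \<ge> 2"
  have "norm (\<Sum>(i,j)\<in>({..<N} \<times> {..<N}) - {(i,j). i + j < N}. (cc i * cc j) *\<^sub>R (Q ^^ (i + j)) x)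
      \<le> (\<Sum>(i,j)\<in>({..<N} \<times> {..<N}) - {(i,j). i + j < N}. norm ((cc i * cc j) *\<^sub>R (Q ^^ (i + j)) x))"
    by (rule norm_sum[THEN order_trans]) (simp add: case_prod_unfold)
  also have "\<dots> \<le> (\<Sum>(i,j)\<in>({..<N} \<times> {..<N}) - {(i,j). i + j < N}. (cc i * cc j) * norm x)"
    by (intro sum_mono) (auto simp: cc_nonneg Qk_contr mult_left_mono)
  also have "\<dots> = (\<Sum>(i,j)\<in>({..<N} \<times> {..<N}) - {(i,j). i + j < N}. cc i * cc j) * norm x"
    by (simp add: sum_distrib_right case_prod_unfold)
  also have "\<dots> = (1 - ss N)\<^sup>2 * norm x" by (simp add: rest_sum[OF N])
  finally show ?thesis .
qed

lemma SS: "sqS A (sqS A x) = x - Q x"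
proof -
  define P where "P N y = y - sqG A N y" for N y
  have Plim: "(\<lambda>N. P N y) \<longlonglongrightarrow> sqS A y" for y
    unfolding P_def sqS_def by (intro tendsto_intros G_lim)
  have Pdiff: "P N y - P N z = P N (y - z)" for N y z unfolding P_def by (simp add: G_diff)
  have Pnorm: "norm (P N y) \<le> 2 * norm y" for N y
    unfolding P_def using norm_triangle_ineq4[of y "sqG A N y"] G_norm[of N y] by simp
  have l1: "(\<lambda>N. P N (P N x)) \<longlonglongrightarrow> x - Q x"
  proof (rule LIM_zero_cancel, rule Lim_null_comparison)
    show "\<forall>\<^sub>F N in sequentially. norm (P N (P N x) - (x - Q x)) \<le> (1 - ss N)\<^sup>2 * norm x"
      unfolding eventually_sequentially
      by (rule exI[of _ 2]) (auto simp: P_def PP_eq rest_norm)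
    have "(\<lambda>N. (1 - ss N)\<^sup>2 * norm x) \<longlonglongrightarrow> (1 - 1)\<^sup>2 * norm x" by (intro tendsto_intros ss_lim)
    then show "(\<lambda>N. (1 - ss N)\<^sup>2 * norm x) \<longlonglongrightarrow> 0" by simp
  qed
  have l2: "(\<lambda>N. P N (P N x)) \<longlonglongrightarrow> sqS A (sqS A x)"
  proof -
    have d: "(\<lambda>N. P N (P N x) - P N (sqS A x)) \<longlonglongrightarrow> 0"
    proof (rule Lim_null_comparison)
      show "\<forall>\<^sub>F N in sequentially. norm (P N (P N x) - P N (sqS A x)) \<le> 2 * norm (P N x - sqS A x)"
        by (simp add: Pdiff Pnorm)
      have "(\<lambda>N. P N x - sqS A x) \<longlonglongrightarrow> 0" using Plim[of x] by (rule LIM_zero)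
      then have "(\<lambda>N. norm (P N x - sqS A x)) \<longlonglongrightarrow> 0" by (rule tendsto_norm_zero)
      then have "(\<lambda>N. 2 * norm (P N x - sqS A x)) \<longlonglongrightarrow> 2 * 0" by (intro tendsto_intros)
      then show "(\<lambda>N. 2 * norm (P N x - sqS A x)) \<longlonglongrightarrow> 0" by simp
    qed
    have "(\<lambda>N. P N (sqS A x) + (P N (P N x) - P N (sqS A x))) \<longlonglongrightarrow> sqS A (sqS A x) + 0"
      by (intro tendsto_add Plim d)
    then show ?thesis by simp
  qed
  show ?thesis using LIMSEQ_unique[OF l2 l1] .
qed

lemma R_cb: "cbounded (sqR A)"
  unfolding sqR_def by (intro cbounded_scaleR S_cb)

lemma R_pos: "opos (sqR A)"
  unfolding opos_def
proof (intro conjI allI R_cb)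
  fix x
  show "Im (cinner (sqR A x) x) = 0" "0 \<le> Re (cinner (sqR A x) x)"
    using opos_Im[OF S_pos, of x] opos_Re[OF S_pos, of x] K_pos
    by (simp_all add: sqR_def cinner_scaleR_left)
qed

lemma RR: "sqR A (sqR A x) = A x"
proof -
  have "sqR A (sqR A x) = (sqrt K * sqrt K) *\<^sub>R sqS A (sqS A x)"
    unfolding sqR_def by (simp add: cb_scaleR[OF S_cb])
  also have "\<dots> = K *\<^sub>R (x - Q x)" using K_pos by (simp add: SS)
  also have "\<dots> = A x" using K_pos unfolding sqQ_def by simp
  finally show ?thesis .
qed

lemma R_comm:
  assumes U: "cbounded U" and c: "\<And>x. U (A x) = A (U x)"
  shows "U (sqR A x) = sqR A (U x)"
  unfolding sqR_def by (simp add: cb_scaleR[OF U] S_comm[OF U c])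

lemma sqrt_unique:
  assumes C: "opos C" and CC: "\<And>x. C (C x) = A x"
  shows "C = sqR A"
proof (rule ext)
  fix x
  have cbC: "cbounded C" using C by (rule opos_cb)
  have CA: "C (A y) = A (C y)" for y using CC by metis
  have CR: "C (sqR A y) = sqR A (C y)" for y by (rule R_comm[OF cbC CA])
  define y where "y = sqR A x - C x"
  have "sqR A y + C y = sqR A (sqR A x) - C (C x) + (C (sqR A x) - sqR A (C x))"
    unfolding y_def by (simp add: cb_diff[OF R_cb] cb_diff[OF cbC] algebra_simps)
  also have "\<dots> = 0" by (simp add: RR CC CR)
  finally have "cinner (sqR A y) y + cinner (C y) y = 0"
    by (metis cinner_add_left cinner_zero_left)
  then have "Re (cinner (sqR A y) y) + Re (cinner (C y) y) = 0" by (metis plus_complex.sel(1) zero_complex.sel(1))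
  then have r1: "Re (cinner (sqR A y) y) \<le> 0" and r2: "Re (cinner (C y) y) \<le> 0"
    using opos_Re[OF R_pos, of y] opos_Re[OF C, of y] by linarith+
  have "sqR A y = 0" by (rule opos_zero_form[OF R_pos r1])
  moreover have "C y = 0" by (rule opos_zero_form[OF C r2])
  moreover have "cinner y y = cinner (sqR A x) y - cinner (C x) y"
    unfolding y_def by (simp add: cinner_diff_left)
  moreover have "cinner (sqR A x) y = cinner x (sqR A y)" by (rule opos_selfadj[OF R_pos])
  moreover have "cinner (C x) y = cinner x (C y)" by (rule opos_selfadj[OF C])
  ultimately have "cinner y y = 0" by simp
  then have "y = 0" using cinner_self_eq_zero[of y] by simp
  then show "C x = sqR A x" unfolding y_def by simp
qed

lemma op_sqrt_eq: "op_sqrt A = sqR A"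
  unfolding op_sqrt_def
proof (rule the_equality)
  show "opos (sqR A) \<and> (\<forall>x. sqR A (sqR A x) = A x)" using R_pos RR by blast
  fix B assume "opos B \<and> (\<forall>x. B (B x) = A x)"
  then show "B = sqR A" using sqrt_unique by blast
qed

lemma op_sqrt_pos: "opos (op_sqrt A)" using R_pos op_sqrt_eq by simp
lemma op_sqrt_sq: "op_sqrt A (op_sqrt A x) = A x" using RR op_sqrt_eq by simp
lemma op_sqrt_comm: "cbounded U \<Longrightarrow> (\<And>x. U (A x) = A (U x)) \<Longrightarrow> U (op_sqrt A x) = op_sqrt A (U x)"
  using R_comm op_sqrt_eq by simp

end


section \<open>Closure of the range of a self-adjoint operator\<close>

lemma csubspace_range: "cbounded A \<Longrightarrow> csubspace (range A)"
  unfolding csubspace_def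
  by (auto simp: cb_add[symmetric] cb_scaleC[symmetric] intro!: image_eqI[of _ A 0] rangeI)

lemma csubspace_closure:
  fixes S :: "'a::complex_inner set"
  assumes "csubspace S" shows "csubspace (closure S)"
  unfolding csubspace_def
proof (intro conjI ballI allI)
  show "0 \<in> closure S" using csubspace_0[OF assms] closure_subset by blast
  fix x y assume x: "x \<in> closure S" and y: "y \<in> closure S"
  obtain f where f: "\<And>n. f n \<in> S" "f \<longlonglongrightarrow> x" using x unfolding closure_sequential by blast
  obtain g where g: "\<And>n. g n \<in> S" "g \<longlonglongrightarrow> y" using y unfolding closure_sequential by blast
  have "(\<lambda>n. f n + g n) \<longlonglongrightarrow> x + y" by (intro tendsto_add f g)
  moreover have "\<And>n. f n + g n \<in> S" using f g csubspace_add[OF assms] by blast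
  ultimately show "x + y \<in> closure S" unfolding closure_sequential by (intro exI[where x="\<lambda>n. f n + g n"]) blast
next
  fix c and x :: 'a assume x: "x \<in> closure S"
  obtain f where f: "\<And>n. f n \<in> S" "f \<longlonglongrightarrow> x" using x unfolding closure_sequential by blast
  have "(\<lambda>n. c *\<^sub>C f n) \<longlonglongrightarrow> c *\<^sub>C x" by (rule bounded_linear.tendsto[OF bounded_linear_scaleC f(2)])
  moreover have "\<And>n. c *\<^sub>C f n \<in> S" using f csubspace_scaleC[OF assms] by blast
  ultimately show "c *\<^sub>C x \<in> closure S" unfolding closure_sequential by (intro exI[where x="\<lambda>n. c *\<^sub>C f n"]) blast
qed

lemma csubspace_ker: "cbounded A \<Longrightarrow> csubspace {y. A y = 0}"
  unfolding csubspace_def by (auto simp: cb_add cb_scaleC)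

context
  fixes A :: "'a::chilbert_space \<Rightarrow> 'a"
  assumes cbA: "cbounded A" and saA: "\<And>x y. cinner (A x) y = cinner x (A y)"
begin

lemma cs_M: "csubspace (closure (range A))" by (intro csubspace_closure csubspace_range cbA)
lemma cl_M: "closed (closure (range A))" by simp

lemma ker_orth_M: "y \<in> closure (range A) \<Longrightarrow> A n = 0 \<Longrightarrow> cinner y n = 0"
proof -
  assume y: "y \<in> closure (range A)" and n: "A n = 0"
  obtain f where f: "\<And>k. f k \<in> range A" "f \<longlonglongrightarrow> y" using y unfolding closure_sequential by blast
  have "(\<lambda>k. cinner (f k) n) \<longlonglongrightarrow> cinner y n"
    by (rule bounded_linear.tendsto[OF bounded_linear_cinner_left f(2)])
  moreover have "cinner (f k) n = 0" for k
  proof -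
    obtain w where "f k = A w" using f(1)[of k] by blast
    then show ?thesis using saA[of w n] n by simp
  qed
  ultimately have "(\<lambda>k. 0::complex) \<longlonglongrightarrow> cinner y n" by simp
  then have "0 = cinner y n" by (rule LIMSEQ_unique[OF tendsto_const])
  then show ?thesis by simp
qed

lemma A_minus_proj: "A (x - proj (closure (range A)) x) = 0"
proof -
  let ?P = "proj (closure (range A))"
  have "cinner (A (x - ?P x)) w = 0" for w
  proof -
    have "A w \<in> closure (range A)" by (rule closure_subset[THEN subsetD, OF rangeI])
    then have "cinner (x - ?P x) (A w) = 0" by (rule proj_orth[OF cs_M cl_M])
    then show ?thesis using saA[of "x - ?P x" w] by simp
  qed
  then show ?thesis by (rule cinner_eq_zero_imp)
qed

lemma mem_M_iff: "y \<in> closure (range A) \<longleftrightarrow> (\<forall>n. A n = 0 \<longrightarrow> cinner y n = 0)"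
proof
  assume "y \<in> closure (range A)" then show "\<forall>n. A n = 0 \<longrightarrow> cinner y n = 0" using ker_orth_M by blast
next
  assume h: "\<forall>n. A n = 0 \<longrightarrow> cinner y n = 0"
  let ?P = "proj (closure (range A))"
  define z where "z = y - ?P y"
  have "A z = 0" unfolding z_def by (rule A_minus_proj)
  then have "cinner y z = 0" using h by blast
  moreover have "cinner (?P y) z = 0" unfolding z_def by (rule proj_orth'[OF cs_M cl_M proj_in[OF cs_M cl_M]])
  moreover have "cinner z z = cinner y z - cinner (?P y) z"
    by (subst (1) z_def) (simp add: cinner_diff_left)
  ultimately have "cinner z z = 0" by simp
  then have "z = 0" using cinner_self_eq_zero[of z] by simp
  then have "y = ?P y" unfolding z_def by simp
  then show "y \<in> closure (range A)" using proj_in[OF cs_M cl_M, of y] by simp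
qed

lemma proj_A: "proj (closure (range A)) (A x) = A x"
  by (rule proj_id[OF cs_M cl_M closure_subset[THEN subsetD, OF rangeI]])

lemma proj_ker: "A n = 0 \<Longrightarrow> proj (closure (range A)) n = 0"
proof (rule proj_zero_orth[OF cs_M cl_M], intro ballI)
  fix y assume "A n = 0" "y \<in> closure (range A)"
  then have "cinner y n = 0" using ker_orth_M by blast
  then show "cinner n y = 0" by (metis cinner_commute complex_cnj_zero)
qed

lemma A_proj: "A (proj (closure (range A)) x) = A x"
  using A_minus_proj[of x] cb_diff[OF cbA] by simp

end

section \<open>Regularity via commutation\<close>

lemma opos_sa: "opos A \<Longrightarrow> cinner (A x) y = cinner x (A y)" by (rule opos_selfadj)

lemma sqrt_ker:
  fixes A :: "'a::chilbert_space \<Rightarrow> 'a"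
  assumes Apos: "opos A" shows "op_sqrt A z = 0 \<longleftrightarrow> A z = 0"
proof
  assume "op_sqrt A z = 0"
  then show "A z = 0" using op_sqrt_sq[OF Apos, of z] cb_zero[OF opos_cb[OF op_sqrt_pos[OF Apos]]] by simp
next
  assume Az: "A z = 0"
  have "Re (cinner (op_sqrt A z) z) \<le> 0"
  proof -
    have "cinner (op_sqrt A z) (op_sqrt A z) = cinner (A z) z"
      using opos_selfadj[OF op_sqrt_pos[OF Apos], of "op_sqrt A z" z] op_sqrt_sq[OF Apos, of z] by simp
    then have "op_sqrt A z = 0" using Az cinner_self_eq_zero[of "op_sqrt A z"] by simp
    then show ?thesis by simp
  qed
  then show "op_sqrt A z = 0" by (rule opos_zero_form[OF op_sqrt_pos[OF Apos]])
qed

context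
  fixes A :: "'a::chilbert_space \<Rightarrow> 'a"
  assumes Apos: "opos A"
begin

private abbreviation "R \<equiv> op_sqrt A"
private abbreviation "Pq \<equiv> proj (closure (range A))"

lemma cbA': "cbounded A" using Apos by (rule opos_cb)
lemma cbR: "cbounded R" using op_sqrt_pos[OF Apos] by (rule opos_cb)
lemma cbP: "cbounded Pq" by (rule cbounded_proj[OF cs_M[OF cbA' opos_sa[OF Apos]] closed_closure])

lemma R_proj: "R (Pq x) = R x"
proof -
  have "A (x - Pq x) = 0" by (rule A_minus_proj[OF cbA' opos_sa[OF Apos]])
  then have "R (x - Pq x) = 0" using sqrt_ker[OF Apos] by blast
  then show ?thesis using cb_diff[OF cbR] by simp
qed

lemma proj_R: "Pq (R x) = R x"
proof (rule proj_id[OF cs_M[OF cbA' opos_sa[OF Apos]] closed_closure])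
  show "R x \<in> closure (range A)"
    unfolding mem_M_iff[OF cbA' opos_sa[OF Apos]]
  proof (intro allI impI)
    fix n assume "A n = 0"
    then have "R n = 0" using sqrt_ker[OF Apos] by blast
    then show "cinner (R x) n = 0" using opos_selfadj[OF op_sqrt_pos[OF Apos], of x n] by simp
  qed
qed

lemma G_fwd:
  assumes W: "cbounded W" and reg: "regular A W"
  shows "A (W x) = Pq (W (A x))"
proof -
  have step: "R (W y) = Pq (W (R y))" for y
  proof -
    have "R (R (W y) - W (R y)) = A (W y) - R (W (R y))"
      using cb_diff[OF cbR] op_sqrt_sq[OF Apos] by simp
    also have "\<dots> = 0" using reg unfolding regular_def by simp
    finally have "A (R (W y) - W (R y)) = 0" using sqrt_ker[OF Apos] by blast
    then have "Pq (R (W y) - W (R y)) = 0" by (rule proj_ker[OF cbA' opos_sa[OF Apos]])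
    then show ?thesis using cb_diff[OF cbP] proj_R by simp
  qed
  have "A (W x) = R (W (R x))" using reg unfolding regular_def by simp
  also have "\<dots> = Pq (W (R (R x)))" by (rule step)
  also have "\<dots> = Pq (W (A x))" using op_sqrt_sq[OF Apos] by simp
  finally show ?thesis .
qed

lemma G_bwd:
  assumes W: "cbounded W" and inv: "\<And>x. A x = 0 \<Longrightarrow> A (W x) = 0"
    and com: "\<And>x. A (W x) = Pq (W (A x))"
  shows "regular A W"
  unfolding regular_def
proof
  fix x
  define U where "U = (\<lambda>y. Pq (W (Pq y)))"
  have cbU: "cbounded U" unfolding U_def by (rule cbounded_comp[OF cbP cbounded_comp[OF W cbP]])
  have AWP: "A (W (Pq y)) = A (W y)" for y
  proof -
    have "A (y - Pq y) = 0" by (rule A_minus_proj[OF cbA' opos_sa[OF Apos]])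
    then have "A (W (y - Pq y)) = 0" by (rule inv)
    then have "A (W y - W (Pq y)) = 0" by (simp only: cb_diff[OF W])
    then show ?thesis by (simp only: cb_diff[OF cbA'] right_minus_eq)
  qed
  have UA: "U (A y) = A (U y)" for y
  proof -
    have "U (A y) = Pq (W (A y))" unfolding U_def by (simp only: proj_A[OF cbA' opos_sa[OF Apos]])
    also have "\<dots> = A (W y)" by (rule com[symmetric])
    also have "\<dots> = A (U y)" unfolding U_def by (simp only: A_proj[OF cbA' opos_sa[OF Apos]] AWP)
    finally show ?thesis .
  qed
  have "R (W (R x)) = R (U (R x))" unfolding U_def by (simp only: proj_R R_proj)
  also have "\<dots> = U (R (R x))" by (rule op_sqrt_comm[OF Apos cbU UA, symmetric])
  also have "\<dots> = U (A x)" by (simp only: op_sqrt_sq[OF Apos])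
  also have "\<dots> = A (W x)" unfolding U_def by (simp only: proj_A[OF cbA' opos_sa[OF Apos]] com[symmetric])
  finally show "A (W x) = R (W (R x))" by simp
qed

end


section \<open>Delta and concavity\<close>

context
  fixes T :: "'a::chilbert_space \<Rightarrow> 'a"
  assumes cbT: "cbounded T"
begin

lemma cbTk: "cbounded (T ^^ k)" by (rule cbounded_funpow[OF cbT])

lemma Delta_cb: "cbounded (Delta T)"
  unfolding Delta_def by (rule cbounded_diff[OF cbounded_comp[OF cbounded_adj[OF cbT] cbT] cbounded_id])

lemma Delta_inner: "cinner (Delta T x) y = cinner (T x) (T y) - cinner x y"
  unfolding Delta_def by (simp add: cinner_diff_left adj_prop2[OF cbT])

lemma Delta_sa: "cinner (Delta T x) y = cinner x (Delta T y)"
  unfolding Delta_inner by (simp add: Delta_def cinner_diff_right adj_prop[OF cbT])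

lemma Delta_Re: "Re (cinner (Delta T x) x) = (norm (T x))\<^sup>2 - (norm x)\<^sup>2"
  by (simp add: Delta_inner norm_sq_cinner)

lemma Delta_Im: "Im (cinner (Delta T x) x) = 0"
  by (simp add: Delta_inner cinner_self)

lemma concave_iff:
  "concave_op T \<longleftrightarrow> (\<forall>x. (norm (T (T x)))\<^sup>2 - 2 * (norm (T x))\<^sup>2 + (norm x)\<^sup>2 \<le> 0)"
proof -
  let ?C = "\<lambda>x. - (adj T (adj T (T (T x))) - 2 *\<^sub>R adj T (T x) + x)"
  have cA: "cbounded (adj T)" by (rule cbounded_adj[OF cbT])
  have cX: "cbounded (\<lambda>x. adj T (adj T (T (T x))))"
    by (rule cbounded_comp[OF cA cbounded_comp[OF cA cbounded_comp[OF cbT cbT]]])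
  have cY: "cbounded (\<lambda>x. 2 *\<^sub>R adj T (T x))"
    by (rule cbounded_scaleR[OF cbounded_comp[OF cA cbT]])
  have cC: "cbounded ?C" by (rule cbounded_minus[OF cbounded_add[OF cbounded_diff[OF cX cY] cbounded_id]])
  have f: "cinner (?C x) x = complex_of_real (- ((norm (T (T x)))\<^sup>2 - 2 * (norm (T x))\<^sup>2 + (norm x)\<^sup>2))" for x
    by (simp add: cinner_minus_left cinner_add_left cinner_diff_left cinner_scaleR_left adj_prop2[OF cbT] cinner_self)
  show ?thesis unfolding concave_op_def opos_def f using cC by (simp add: algebra_simps)
qed

end

context
  fixes T :: "'a::chilbert_space \<Rightarrow> 'a"
  assumes cbT: "cbounded T" and conc: "concave_op T"
begin

definition aa :: "'a \<Rightarrow> nat \<Rightarrow> real" where "aa x k = (norm ((T ^^ k) x))\<^sup>2"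

lemma aa_conc: "aa x (Suc (Suc k)) - 2 * aa x (Suc k) + aa x k \<le> 0"
  using conc unfolding concave_iff[OF cbT] aa_def by simp

lemma dd_dec: "aa x (Suc (Suc k)) - aa x (Suc k) \<le> aa x (Suc k) - aa x k"
  using aa_conc[of x k] by simp

lemma dd_anti: "i \<le> j \<Longrightarrow> aa x (Suc j) - aa x j \<le> aa x (Suc i) - aa x i"
proof (induction j)
  case (Suc j)
  show ?case
  proof (cases "i = Suc j")
    case False
    then have "i \<le> j" using Suc by simp
    then show ?thesis using Suc dd_dec[of x j] by simp
  qed simp
qed simp

lemma dd_nonneg: "0 \<le> aa x (Suc k) - aa x k"
proof (rule ccontr)
  define d where "d = aa x (Suc k) - aa x k"
  assume "\<not> 0 \<le> aa x (Suc k) - aa x k"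
  then have d: "d < 0" unfolding d_def by simp
  have bound: "aa x (k + m) \<le> aa x k + real m * d" for m
  proof (induction m)
    case (Suc m)
    have "aa x (Suc (k + m)) - aa x (k + m) \<le> d" unfolding d_def by (rule dd_anti) simp
    then show ?case using Suc by (simp add: algebra_simps)
  qed simp
  obtain m :: nat where m: "aa x k / (- d) < real m" using reals_Archimedean2 by blast
  then have "aa x k < real m * (- d)" using d pos_divide_less_eq[of "-d" "aa x k" "real m"] by linarith
  then have "aa x (k + m) < 0" using bound[of m] by simp
  moreover have "0 \<le> aa x (k + m)" unfolding aa_def by simp
  ultimately show False by simp
qed

lemma aa_mono: "i \<le> j \<Longrightarrow> aa x i \<le> aa x j"
proof (induction j)
  case (Suc j)
  then show ?case using dd_nonneg[of x j] by (cases "i = Suc j") auto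
qed simp

lemma expansive: "(norm x)\<^sup>2 \<le> (norm (T x))\<^sup>2"
  using aa_mono[of 0 1 x] unfolding aa_def by simp

lemma aa_key: "aa x (n + m) - aa x n \<le> aa x m - aa x 0"
proof (induction m)
  case (Suc m)
  have "aa x (Suc (n + m)) - aa x (n + m) \<le> aa x (Suc m) - aa x m" by (rule dd_anti) simp
  then show ?case using Suc by simp
qed simp

lemma concave_pow: "concave_op (T ^^ n)"
  unfolding concave_iff[OF cbTk[OF cbT]]
proof
  fix x
  have "(T ^^ n) ((T ^^ n) x) = (T ^^ (n + n)) x" by (simp add: funpow_add)
  then show "(norm ((T ^^ n) ((T ^^ n) x)))\<^sup>2 - 2 * (norm ((T ^^ n) x))\<^sup>2 + (norm x)\<^sup>2 \<le> 0"
    using aa_key[of x n n] unfolding aa_def by simp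
qed

lemma Delta_pos: "opos (Delta T)"
  unfolding opos_def using Delta_cb[OF cbT] Delta_Im[OF cbT] Delta_Re[OF cbT] expansive by simp

lemma N_inv: "Delta T x = 0 \<Longrightarrow> Delta T (T x) = 0"
proof -
  assume D: "Delta T x = 0"
  then have e: "(norm (T x))\<^sup>2 = (norm x)\<^sup>2" using Delta_Re[OF cbT, of x] by simp
  have c: "(norm (T (T x)))\<^sup>2 - 2 * (norm (T x))\<^sup>2 + (norm x)\<^sup>2 \<le> 0"
    using conc unfolding concave_iff[OF cbT] by blast
  have "Re (cinner (Delta T (T x)) (T x)) = (norm (T (T x)))\<^sup>2 - (norm (T x))\<^sup>2"
    by (rule Delta_Re[OF cbT])
  then have "Re (cinner (Delta T (T x)) (T x)) \<le> 0" using c e by linarith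
  then show ?thesis by (rule opos_zero_form[OF Delta_pos])
qed

end

lemma adj_id: "adj (\<lambda>x::'a::complex_inner. x) = (\<lambda>x. x)"
  by (rule adj_eqI) simp

lemma Delta_pow_sum:
  fixes T :: "'a::chilbert_space \<Rightarrow> 'a"
  assumes cbT: "cbounded T"
  shows "Delta (T ^^ n) x = (\<Sum>k<n. adj (T ^^ k) (Delta T ((T ^^ k) x)))"
proof -
  have "adj (T ^^ n) ((T ^^ n) x) = x + (\<Sum>k<n. adj (T ^^ k) (Delta T ((T ^^ k) x)))"
  proof (induction n)
    case 0 then show ?case by (simp add: adj_id)
  next
    case (Suc n)
    have cbAn: "cbounded (adj T ^^ n)" by (rule cbounded_funpow[OF cbounded_adj[OF cbT]])
    have e1: "(adj T ^^ Suc n) y = (adj T ^^ n) (adj T y)" for y by (simp only: funpow_Suc_right comp_def)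
    have "adj (T ^^ Suc n) ((T ^^ Suc n) x) = (adj T ^^ Suc n) (T ((T ^^ n) x))"
      by (simp only: adj_funpow[OF cbT]) simp
    also have "\<dots> = (adj T ^^ n) (adj T (T ((T ^^ n) x)))" by (rule e1)
    also have "adj T (T ((T ^^ n) x)) = Delta T ((T ^^ n) x) + (T ^^ n) x" by (simp add: Delta_def)
    also have "(adj T ^^ n) (Delta T ((T ^^ n) x) + (T ^^ n) x)
        = adj (T ^^ n) (Delta T ((T ^^ n) x)) + adj (T ^^ n) ((T ^^ n) x)"
      by (simp add: cb_add[OF cbAn] adj_funpow[OF cbT])
    finally show ?case using Suc by (simp add: algebra_simps)
  qed
  then show ?thesis unfolding Delta_def by simp
qed


lemma commute_funpow:
  assumes "\<And>x. f (g x) = g (f x)" shows "f ((g ^^ k) x) = (g ^^ k) (f x)"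
  by (induction k) (simp_all add: assms)

lemma adj_zero: "adj (\<lambda>x::'a::complex_inner. 0::'a) = (\<lambda>x. 0)"
  by (rule adj_eqI) simp

lemma quasinormal_zero: "quasinormal (\<lambda>x::'a::complex_inner. 0::'a)"
  unfolding quasinormal_def adj_zero by simp

context
  fixes T :: "'a::chilbert_space \<Rightarrow> 'a"
  assumes cbT: "cbounded T" and conc: "concave_op T"
begin

private abbreviation "D \<equiv> Delta T"
private abbreviation "M \<equiv> closure (range (Delta T))"
private abbreviation "P \<equiv> proj (closure (range (Delta T)))"
private abbreviation "C \<equiv> compression (closure (range (Delta T))) T"

lemma saD: "cinner (D x) y = cinner x (D y)" by (rule Delta_sa[OF cbT])
lemma saD': "cinner x (D y) = cinner (D x) y" by (rule saD[symmetric])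
lemma cbD: "cbounded D" by (rule Delta_cb[OF cbT])
lemma posD: "opos D" by (rule Delta_pos[OF cbT conc])
lemma csM: "csubspace M" by (rule cs_M[OF cbD saD])
lemma cbPD: "cbounded P" by (rule cbounded_proj[OF csM closed_closure])
lemma Dm: "D (x - P x) = 0" by (rule A_minus_proj[OF cbD saD])
lemma DP: "D (P x) = D x" by (rule A_proj[OF cbD saD])
lemma PD: "P (D x) = D x" by (rule proj_A[OF cbD saD])
lemma Pker: "D n = 0 \<Longrightarrow> P n = 0" by (rule proj_ker[OF cbD saD])
lemma C_eq: "C x = P (T (P x))" unfolding compression_def by simp
lemma cbC: "cbounded C" unfolding compression_def by (rule cbounded_comp[OF cbPD cbounded_comp[OF cbT cbPD]])

lemma PT: "P (T x) = C x"
proof -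
  have "D (T (x - P x)) = 0" by (rule N_inv[OF cbT conc Dm])
  then have "P (T (x - P x)) = 0" by (rule Pker)
  then have "P (T x) - P (T (P x)) = 0" by (simp only: cb_diff[OF cbT] cb_diff[OF cbPD])
  then show ?thesis by (simp add: C_eq)
qed

lemma CP: "C (P x) = C x" by (simp add: C_eq proj_idem[OF csM closed_closure])

section \<open>Part (b)\<close>

lemma projN: "proj {y. D y = 0} z = z - P z"
proof (rule proj_eqI[OF csubspace_ker[OF cbD]])
  show "z - P z \<in> {y. D y = 0}" using Dm by simp
  show "\<forall>y\<in>{y. D y = 0}. cinner (z - (z - P z)) y = 0"
    using ker_orth_M[OF cbD saD proj_in[OF csM closed_closure]] by simp
qed

lemma partb:
  fixes \<sigma> :: real
  assumes s0: "\<sigma> > 0" and s2: "\<sigma>\<^sup>2 = onorm D + 1"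
    and iso: "\<forall>x\<in>M. norm ((1 / \<sigma>) *\<^sub>R proj {y. D y = 0} (T x)) = norm x"
  shows "C = (\<lambda>x. 0)" and "regular D T"
proof -
  have PTM: "P (T x) = 0" if xM: "x \<in> M" for x
  proof -
    have "norm ((1 / \<sigma>) *\<^sub>R (T x - P (T x))) = norm x" using iso xM unfolding projN by blast
    then have "\<bar>1 / \<sigma>\<bar> * norm (T x - P (T x)) = norm x" by (simp only: norm_scaleR)
    then have n1: "norm (T x - P (T x)) = \<sigma> * norm x" using s0 by (simp add: field_simps)
    have "(norm (T x))\<^sup>2 = (norm (P (T x)))\<^sup>2 + (norm (T x - P (T x)))\<^sup>2"
      by (rule proj_norm_sq[OF csM closed_closure])
    moreover have "(norm (T x))\<^sup>2 \<le> (norm x)\<^sup>2 + onorm D * (norm x)\<^sup>2"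
    proof -
      have "Re (cinner (D x) x) \<le> cmod (cinner (D x) x)" by (rule complex_Re_le_cmod)
      also have "\<dots> \<le> norm (D x) * norm x" by (rule cauchy_schwarz)
      also have "\<dots> \<le> onorm D * norm x * norm x" by (intro mult_right_mono cb_norm[OF cbD]) auto
      finally show ?thesis using Delta_Re[OF cbT, of x] by (simp add: power2_eq_square)
    qed
    ultimately have "(norm (P (T x)))\<^sup>2 \<le> (norm x)\<^sup>2 + onorm D * (norm x)\<^sup>2 - (\<sigma> * norm x)\<^sup>2"
      using n1 by simp
    also have "\<dots> = 0" using s2 by (simp add: power_mult_distrib algebra_simps)
    finally show "P (T x) = 0" by simp
  qed
  have C0: "C x = 0" for x unfolding C_eq by (rule PTM[OF proj_in[OF csM closed_closure]])
  then show "C = (\<lambda>x. 0)" by (rule ext)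
  show "regular D T"
  proof (rule G_bwd[OF posD cbT])
    show "D (T x) = 0" if "D x = 0" for x by (rule N_inv[OF cbT conc that])
    show "D (T x) = P (T (D x))" for x
    proof -
      have "D (T x) = D (P (T x))" by (rule DP[symmetric])
      also have "\<dots> = 0" by (simp add: PT C0 cb_zero[OF cbD])
      also have "\<dots> = P (T (D x))" by (simp add: PT C0)
      finally show ?thesis .
    qed
  qed
qed

section \<open>Part (a)\<close>

context
  assumes reg: "regular D T" and qn: "quasinormal C"
begin

private abbreviation "Cs \<equiv> adj C"
private abbreviation "B \<equiv> (\<lambda>x. Cs (C x))"

lemma cbCs: "cbounded Cs" by (rule cbounded_adj[OF cbC])
lemma cbB: "cbounded B" by (rule cbounded_comp[OF cbCs cbC])

lemma DT: "D (T x) = C (D x)"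
  using G_fwd[OF posD cbT reg, of x] PT by simp

lemma DC: "D (C x) = C (D x)"
proof -
  have "D (C x) = D (P (T (P x)))" by (simp add: C_eq)
  also have "\<dots> = D (T (P x))" by (rule DP)
  also have "\<dots> = C (D (P x))" by (rule DT)
  also have "\<dots> = C (D x)" by (simp add: DP)
  finally show ?thesis .
qed

lemma DCs: "D (Cs x) = Cs (D x)"
proof (rule cinner_ext_right)
  fix y
  have "cinner y (D (Cs x)) = cinner (D y) (Cs x)" by (rule saD')
  also have "\<dots> = cinner (C (D y)) x" by (rule adj_prop[OF cbC, symmetric])
  also have "\<dots> = cinner (D (C y)) x" by (simp add: DC)
  also have "\<dots> = cinner (C y) (D x)" by (rule saD)
  also have "\<dots> = cinner y (Cs (D x))" by (rule adj_prop[OF cbC])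
  finally show "cinner y (D (Cs x)) = cinner y (Cs (D x))" .
qed

lemma DCk: "D ((C ^^ k) x) = (C ^^ k) (D x)"
  by (induction k) (simp_all add: DC)

lemma DCsk: "D ((Cs ^^ k) x) = (Cs ^^ k) (D x)"
  by (induction k) (simp_all add: DCs)

lemma DTk: "D ((T ^^ k) x) = (C ^^ k) (D x)"
  by (induction k) (simp_all add: DT)

lemma PTk: "P ((T ^^ k) x) = (C ^^ k) (P x)"
proof (induction k)
  case (Suc k)
  have "P ((T ^^ Suc k) x) = C ((T ^^ k) x)" by (simp add: PT)
  also have "\<dots> = C (P ((T ^^ k) x))" by (rule CP[symmetric])
  also have "\<dots> = (C ^^ Suc k) (P x)" using Suc by simp
  finally show ?case .
qed simp

lemma adjTk: "adj (T ^^ k) (D y) = D ((Cs ^^ k) y)"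
proof (rule cinner_ext_right)
  fix z
  have "cinner z (adj (T ^^ k) (D y)) = cinner ((T ^^ k) z) (D y)" by (rule adj_prop[OF cbTk[OF cbT], symmetric])
  also have "\<dots> = cinner (D ((T ^^ k) z)) y" by (rule saD')
  also have "\<dots> = cinner ((C ^^ k) (D z)) y" by (simp add: DTk)
  also have "\<dots> = cinner (D z) (adj (C ^^ k) y)" by (rule adj_prop[OF cbounded_funpow[OF cbC]])
  also have "\<dots> = cinner (D z) ((Cs ^^ k) y)" by (simp add: adj_funpow[OF cbC])
  also have "\<dots> = cinner z (D ((Cs ^^ k) y))" by (rule saD)
  finally show "cinner z (adj (T ^^ k) (D y)) = cinner z (D ((Cs ^^ k) y))" .
qed

lemma CB: "C (B x) = B (C x)" using qn unfolding quasinormal_def by blast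

lemma CBk: "C ((B ^^ k) x) = (B ^^ k) (C x)"
  by (rule commute_funpow[of C B, OF CB])

lemma CnBk: "(C ^^ n) ((B ^^ k) x) = (B ^^ k) ((C ^^ n) x)"
  by (rule commute_funpow[of "B ^^ k" C, OF CBk[symmetric], symmetric])

lemma DB: "D (B x) = B (D x)" by (simp add: DCs DC)

lemma DBk: "D ((B ^^ k) x) = (B ^^ k) (D x)"
  by (rule commute_funpow[of D B, OF DB])

lemma Ek: "(Cs ^^ k) ((C ^^ k) x) = (B ^^ k) x"
proof (induction k arbitrary: x)
  case (Suc k)
  have "(C ^^ Suc k) x = (C ^^ k) (C x)" by (simp add: funpow_swap1)
  then have "(Cs ^^ Suc k) ((C ^^ Suc k) x) = Cs ((Cs ^^ k) ((C ^^ k) (C x)))"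
    by simp
  also have "\<dots> = Cs ((B ^^ k) (C x))" by (simp only: Suc)
  also have "\<dots> = Cs (C ((B ^^ k) x))" by (simp only: CBk)
  also have "\<dots> = (B ^^ Suc k) x" by simp
  finally show ?case .
qed simp

lemma term_k: "adj (T ^^ k) (D ((T ^^ k) x)) = (B ^^ k) (D x)"
proof -
  have "adj (T ^^ k) (D ((T ^^ k) x)) = D ((Cs ^^ k) ((T ^^ k) x))" by (rule adjTk)
  also have "\<dots> = (Cs ^^ k) (D ((T ^^ k) x))" by (rule DCsk)
  also have "\<dots> = (Cs ^^ k) ((C ^^ k) (D x))" by (simp only: DTk)
  also have "\<dots> = (B ^^ k) (D x)" by (rule Ek)
  finally show ?thesis .
qed

lemma Dn: "Delta (T ^^ n) x = (\<Sum>k<n. (B ^^ k) (D x))"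
  by (simp add: Delta_pow_sum[OF cbT] term_k)

lemma com_n: "Delta (T ^^ n) ((T ^^ n) x) = P ((T ^^ n) (Delta (T ^^ n) x))"
proof -
  have cbCn: "cbounded (C ^^ n)" by (rule cbounded_funpow[OF cbC])
  have "Delta (T ^^ n) ((T ^^ n) x) = (\<Sum>k<n. (B ^^ k) ((C ^^ n) (D x)))"
    by (simp add: Dn DTk)
  also have "\<dots> = (\<Sum>k<n. (C ^^ n) ((B ^^ k) (D x)))" by (simp add: CnBk)
  also have "\<dots> = (C ^^ n) (\<Sum>k<n. (B ^^ k) (D x))" by (simp add: cb_sum[OF cbCn])
  also have "(\<Sum>k<n. (B ^^ k) (D x)) = P (\<Sum>k<n. (B ^^ k) (D x))"
  proof -
    have "P (\<Sum>k<n. (B ^^ k) (D x)) = (\<Sum>k<n. P ((B ^^ k) (D x)))" by (rule cb_sum[OF cbPD])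
    also have "\<dots> = (\<Sum>k<n. (B ^^ k) (D x))" by (intro sum.cong refl) (simp only: DBk[symmetric] PD)
    finally show ?thesis by simp
  qed
  also have "(C ^^ n) (P (\<Sum>k<n. (B ^^ k) (D x))) = P ((T ^^ n) (\<Sum>k<n. (B ^^ k) (D x)))"
    by (rule PTk[symmetric])
  finally show ?thesis by (simp add: Dn)
qed

lemma ker_n:
  assumes n: "n \<ge> 1"
  shows "Delta (T ^^ n) x = 0 \<longleftrightarrow> D x = 0"
proof
  assume "D x = 0"
  then show "Delta (T ^^ n) x = 0" by (simp add: Dn cb_zero[OF cbounded_funpow[OF cbB]])
next
  assume z: "Delta (T ^^ n) x = 0"
  have "aa T x 1 \<le> aa T x n" by (rule aa_mono[OF cbT conc n])
  then have "Re (cinner (D x) x) \<le> Re (cinner (Delta (T ^^ n) x) x)"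
    by (simp add: aa_def[OF cbT conc] Delta_Re[OF cbT] Delta_Re[OF cbTk[OF cbT]])
  then have "Re (cinner (D x) x) \<le> 0" using z by simp
  then show "D x = 0" by (rule opos_zero_form[OF posD])
qed

lemma Mn: "n \<ge> 1 \<Longrightarrow> closure (range (Delta (T ^^ n))) = M"
proof -
  assume n: "n \<ge> 1"
  show ?thesis
    unfolding set_eq_iff mem_M_iff[OF Delta_cb[OF cbTk[OF cbT]] Delta_sa[OF cbTk[OF cbT]]]
      mem_M_iff[OF cbD saD] ker_n[OF n] by simp
qed

lemma reg_n:
  assumes n: "n \<ge> 1"
  shows "regular (Delta (T ^^ n)) (T ^^ n)"
proof (rule G_bwd[OF Delta_pos[OF cbTk[OF cbT] concave_pow[OF cbT conc]] cbTk[OF cbT]])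
  show "Delta (T ^^ n) ((T ^^ n) x) = 0" if "Delta (T ^^ n) x = 0" for x
  proof -
    have "D x = 0" using that ker_n[OF n] by simp
    then have "D ((T ^^ n) x) = 0" by (simp add: DTk cb_zero[OF cbounded_funpow[OF cbC]])
    then show ?thesis using ker_n[OF n] by simp
  qed
  show "Delta (T ^^ n) ((T ^^ n) x) = proj (closure (range (Delta (T ^^ n)))) ((T ^^ n) (Delta (T ^^ n) x))" for x
    unfolding Mn[OF n] by (rule com_n)
qed

end

end

theorem corollary4p4:
  fixes T :: "'a::chilbert_space \<Rightarrow> 'a"
  assumes "cbounded T"
  shows "(concave_op T \<and> regular (Delta T) T
            \<and> quasinormal (compression (closure (range (Delta T))) T)
          \<longrightarrow> (\<forall>n::nat. n \<ge> 2 \<longrightarrow> concave_op (T ^^ n) \<and> regular (Delta (T ^^ n)) (T ^^ n)))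
       \<and> (\<forall>\<sigma>::real. concave_op T \<and> \<sigma> > 0 \<and> \<sigma>\<^sup>2 = onorm (Delta T) + 1
            \<and> (\<forall>x\<in>closure (range (Delta T)).
                 norm ((1 / \<sigma>) *\<^sub>R proj {y. Delta T y = 0} (T x)) = norm x)
          \<longrightarrow> (regular (Delta T) T \<longleftrightarrow>
                 quasinormal (compression (closure (range (Delta T))) T)
                 \<and> (\<forall>x\<in>closure (range (Delta T)).
                      norm (compression (closure (range (Delta T))) T x) \<le> norm x)))"
proof (rule conjI)
  show "concave_op T \<and> regular (Delta T) T
            \<and> quasinormal (compression (closure (range (Delta T))) T)
          \<longrightarrow> (\<forall>n::nat. n \<ge> 2 \<longrightarrow> concave_op (T ^^ n) \<and> regular (Delta (T ^^ n)) (T ^^ n))"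
  proof (intro impI allI)
    fix n :: nat
    assume h: "concave_op T \<and> regular (Delta T) T \<and> quasinormal (compression (closure (range (Delta T))) T)"
      and n: "2 \<le> n"
    have c: "concave_op T" using h by blast
    have r: "regular (Delta T) T" using h by blast
    have q: "quasinormal (compression (closure (range (Delta T))) T)" using h by blast
    have n1: "1 \<le> n" using n by simp
    show "concave_op (T ^^ n) \<and> regular (Delta (T ^^ n)) (T ^^ n)"
      using concave_pow[OF assms c] reg_n[OF assms c r q n1] by blast
  qed
  show "\<forall>\<sigma>::real. concave_op T \<and> \<sigma> > 0 \<and> \<sigma>\<^sup>2 = onorm (Delta T) + 1
            \<and> (\<forall>x\<in>closure (range (Delta T)).
                 norm ((1 / \<sigma>) *\<^sub>R proj {y. Delta T y = 0} (T x)) = norm x)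
          \<longrightarrow> (regular (Delta T) T \<longleftrightarrow>
                 quasinormal (compression (closure (range (Delta T))) T)
                 \<and> (\<forall>x\<in>closure (range (Delta T)).
                      norm (compression (closure (range (Delta T))) T x) \<le> norm x))"
  proof (intro allI impI)
    fix \<sigma> :: real
    assume h: "concave_op T \<and> \<sigma> > 0 \<and> \<sigma>\<^sup>2 = onorm (Delta T) + 1
              \<and> (\<forall>x\<in>closure (range (Delta T)).
                   norm ((1 / \<sigma>) *\<^sub>R proj {y. Delta T y = 0} (T x)) = norm x)"
    have c: "concave_op T" using h by blast
    have s0: "\<sigma> > 0" using h by blast
    have s2: "\<sigma>\<^sup>2 = onorm (Delta T) + 1" using h by blast
    have iso: "\<forall>x\<in>closure (range (Delta T)). norm ((1 / \<sigma>) *\<^sub>R proj {y. Delta T y = 0} (T x)) = norm x"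
      using h by blast
    have C0: "compression (closure (range (Delta T))) T = (\<lambda>x. 0)"
      by (rule partb(1)[OF assms c s0 s2 iso])
    have r: "regular (Delta T) T" by (rule partb(2)[OF assms c s0 s2 iso])
    show "regular (Delta T) T \<longleftrightarrow>
                 quasinormal (compression (closure (range (Delta T))) T)
                 \<and> (\<forall>x\<in>closure (range (Delta T)).
                      norm (compression (closure (range (Delta T))) T x) \<le> norm x)"
      using r unfolding C0 by (simp add: quasinormal_zero)
  qed
qed


end
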